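(* Fix $T>0$, $x_0\in\mathbb R$, $L>0$, $L_1>0$, $q\ge1$, $H\in(\frac12,1)$ and an integer $k\ge1$. Let $G$ satisfy (A2) and (A3), and let $\varphi_\epsilon=\epsilon^{1/(k-H+2)}$. For each $\theta\in\Theta_{k+1}(L)$ and $\epsilon>0$ let $X$ solve the SDE below and let $\widehat{\theta}_tX_t$ be the kernel estimator below. Then for any $0<a\le b<T$, $$\limsup_{\epsilon\to0}\ \sup_{\theta\in\Theta_{k+1}(L)}\ \sup_{a\le t\le b}E_\theta\big[|\widehat{\theta}_tX_t-\theta(t)x_t|^2\big]\,\epsilon^{-\min\left(2,\frac{2(k+1)}{k+2-H}\right)}<\infty .$$
   Context: Hermite process: let $W=\{W(h),h\in L^2(\mathbb R)\}$ be a centered Gaussian family with $E[W(h)W(g)]=\langle h,g\rangle_{L^2(\mathbb R)}$; for an integer $q\ge1$ and $H\in(\frac12,1)$ set $H_0=1+\frac{H-1}{q}$, $c(q,H)=\sqrt{H(2H-1)/(q!\,\beta(H_0-\frac12,2-2H_0)^q)}$ and $Z^{q,H}_t=c(q,H)\int_{\mathbb R^q}\big(\int_0^t\prod_{j=1}^q(s-\psi_j)_+^{H_0-3/2}ds\big)dW_{\psi_1}\cdots dW_{\psi_q}$ (multiple Wiener–Itô integral; continuous version used). It is centered, $H$-self-similar, has stationary increments and covariance $\frac12(t^{2H}+s^{2H}-|t-s|^{2H})$. For deterministic $f$ with $\int\int|f(u)f(v)||u-v|^{2H-2}dudv<\infty$ the Wiener integral is $\int_{\mathbb R}f\,dZ^{q,H}=c(q,H)\int_{\mathbb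 R^q}\big(\int_{\mathbb R}f(u)\prod_{j=1}^q(u-\psi_j)_+^{H_0-3/2}du\big)dW_{\psi_1}\cdots dW_{\psi_q}$ (and $\int_0^T f\,dZ^{q,H}:=\int_{\mathbb R}f1_{[0,T]}dZ^{q,H}$); it has mean $0$ and $E[\int f dZ^{q,H}\int g dZ^{q,H}]=H(2H-1)\int\int f(u)g(v)|u-v|^{2H-2}dudv$. Model: for $\theta:[0,T]\to\mathbb R$ and $\epsilon>0$, $X$ is the pathwise solution of $X_t=x_0+\int_0^t\theta(s)X_sds+\epsilon Z^{q,H}_t$, $0\le t\le T$ (i.e. $dX_t=\theta(t)X_tdt+\epsilon dZ^{q,H}_t$), and $x_t=x_0\exp(\int_0^t\theta(s)ds)$; $E_\theta$ denotes expectation when $\theta$ is the true multiplier. Classes: for an integer $m\ge0$, $\Theta_m(L)$ is the set of functions $\theta$ with $|\theta(t)|\le L$ for all $t$ (condition (A1)), $m$ times differentiable, with $|\theta^{(m)}(x)-\theta^{(m)}(y)|\le L_1|x-y|$ for all $x,y$. Kernel: $G$ is a bounded measurable function with compact support $[A,B]$, $A<0<B$, satisfying (A2): $\int_A^BG(u)du=1$, and (A3): $\int_{-\infty}^{\infty}u^jG(u)du=0$ for $j=1,\dots,k$. Estimator: $\widehat{\theta}_tX_t:=\frac1{\varphi_\epsilon}\int_0^TG\big(\frac{\tau-t}{\varphi_\epsilon}\big)dX_\tau=\frac1{\varphi_\epsilon}\int_0^TG\big(\frac{\tau-t}{\varphi_\epsilon}\big)\theta(\tau)X_\tau d\tau+\frac{\epsilon}{\varphi_\epsilon}\int_0^TG\big(\frac{\tau-t}{\varphi_\epsilon}\big)dZ^{q,H}_\tau$.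 *)

theory Defs
  imports "HOL-Probability.Probability"
begin

definition Theta_class :: "real \<Rightarrow> nat \<Rightarrow> real \<Rightarrow> real \<Rightarrow> (real \<Rightarrow> real) set" where
  "Theta_class T m L L1 = {\<theta>. (\<forall>t\<in>{0..T}. \<bar>\<theta> t\<bar> \<le> L) \<and>
     (\<exists>D :: nat \<Rightarrow> real \<Rightarrow> real.
        (\<forall>t\<in>{0..T}. D 0 t = \<theta> t) \<and>
        (\<forall>j<m. \<forall>t\<in>{0..T}. (D j has_real_derivative D (Suc j) t) (at t within {0..T})) \<and>
        (\<forall>x\<in>{0..T}. \<forall>y\<in>{0..T}. \<bar>D m x - D m y\<bar> \<le> L1 * \<bar>x - y\<bar>))}"

definition kernel_ok :: "nat \<Rightarrow> (real \<Rightarrow> real) \<Rightarrow> bool" where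
  "kernel_ok k G \<longleftrightarrow> G \<in> borel_measurable borel \<and> (\<exists>K. \<forall>u. \<bar>G u\<bar> \<le> K) \<and>
     (\<exists>A B. A < 0 \<and> 0 < B \<and> (\<forall>u. u \<notin> {A..B} \<longrightarrow> G u = 0) \<and>
        (LINT u|lborel. G u) = 1 \<and>
        (\<forall>j\<in>{1..k}. (LINT u|lborel. u ^ j * G u) = 0))"

definition wiener_admissible :: "real \<Rightarrow> (real \<Rightarrow> real) \<Rightarrow> bool" where
  "wiener_admissible H f \<longleftrightarrow> f \<in> borel_measurable borel \<and>
     (\<integral>\<^sup>+ p. ennreal (\<bar>f (fst p) * f (snd p)\<bar> * \<bar>fst p - snd p\<bar> powr (2*H - 2)) \<partial>(lborel \<Otimes>\<^sub>M lborel)) < \<infinity>"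

text \<open>Properties of a (continuous version of a) Hermite process Z with Hurst index H on the
  probability space M, together with its Wiener integral operator WI (WI f = \<integral> f dZ),
  as listed in the context: centred, covariance (t^2H+s^2H-|t-s|^2H)/2, continuous paths,
  and WI f centred with covariance H(2H-1) \<integral>\<integral> f(u)g(v)|u-v|^(2H-2), linear, and
  WI(1_[0,t]) = Z_t.\<close>
definition hermite_setting ::
  "'a measure \<Rightarrow> real \<Rightarrow> (real \<Rightarrow> 'a \<Rightarrow> real) \<Rightarrow> ((real \<Rightarrow> real) \<Rightarrow> 'a \<Rightarrow> real) \<Rightarrow> bool" where
  "hermite_setting M H Z WI \<longleftrightarrow> prob_space M \<and>
     (\<forall>t\<ge>0. Z t \<in> borel_measurable M \<and> integrable M (\<lambda>\<omega>. (Z t \<omega>)\<^sup>2) \<and>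
             (\<integral>\<omega>. Z t \<omega> \<partial>M) = 0) \<and>
     (\<forall>s\<ge>0. \<forall>t\<ge>0. (\<integral>\<omega>. Z s \<omega> * Z t \<omega> \<partial>M) =
             (t powr (2*H) + s powr (2*H) - \<bar>t - s\<bar> powr (2*H)) / 2) \<and>
     (\<forall>\<omega>\<in>space M. continuous_on {0..} (\<lambda>t. Z t \<omega>)) \<and>
     (\<forall>f. wiener_admissible H f \<longrightarrow>
         WI f \<in> borel_measurable M \<and> integrable M (\<lambda>\<omega>. (WI f \<omega>)\<^sup>2) \<and>
         (\<integral>\<omega>. WI f \<omega> \<partial>M) = 0) \<and>
     (\<forall>f g. wiener_admissible H f \<longrightarrow> wiener_admissible H g \<longrightarrow>
         (\<integral>\<omega>. WI f \<omega> * WI g \<omega> \<partial>M) =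
           H * (2*H - 1) * (\<integral>p. f (fst p) * g (snd p) * \<bar>fst p - snd p\<bar> powr (2*H - 2)
                              \<partial>(lborel \<Otimes>\<^sub>M lborel))) \<and>
     (\<forall>f g a b. wiener_admissible H f \<longrightarrow> wiener_admissible H g \<longrightarrow>
         (AE \<omega> in M. WI (\<lambda>u. a * f u + b * g u) \<omega> = a * WI f \<omega> + b * WI g \<omega>)) \<and>
     (\<forall>t\<ge>0. AE \<omega> in M. WI (indicator {0..t}) \<omega> = Z t \<omega>)"

definition solves_sde ::
  "'a measure \<Rightarrow> real \<Rightarrow> real \<Rightarrow> real \<Rightarrow> (real \<Rightarrow> real) \<Rightarrow> (real \<Rightarrow> 'a \<Rightarrow> real) \<Rightarrow> (real \<Rightarrow> 'a \<Rightarrow> real) \<Rightarrow> bool" where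
  "solves_sde M T x0 \<epsilon> \<theta> Z X \<longleftrightarrow>
     (\<forall>\<omega>\<in>space M. continuous_on {0..T} (\<lambda>s. X s \<omega>) \<and>
        (\<forall>t\<in>{0..T}. X t \<omega> = x0 + integral {0..t} (\<lambda>s. \<theta> s * X s \<omega>) + \<epsilon> * Z t \<omega>))"

definition det_sol :: "real \<Rightarrow> (real \<Rightarrow> real) \<Rightarrow> real \<Rightarrow> real" where
  "det_sol x0 \<theta> t = x0 * exp (integral {0..t} \<theta>)"

definition kernel_est ::
  "(real \<Rightarrow> real) \<Rightarrow> real \<Rightarrow> real \<Rightarrow> real \<Rightarrow> (real \<Rightarrow> real) \<Rightarrow> (real \<Rightarrow> 'a \<Rightarrow> real)
    \<Rightarrow> ((real \<Rightarrow> real) \<Rightarrow> 'a \<Rightarrow> real) \<Rightarrow> real \<Rightarrow> 'a \<Rightarrow> real" where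
  "kernel_est G \<phi> T \<epsilon> \<theta> X WI t \<omega> =
     (1 / \<phi>) * integral {0..T} (\<lambda>\<tau>. G ((\<tau> - t) / \<phi>) * \<theta> \<tau> * X \<tau> \<omega>)
     + (\<epsilon> / \<phi>) * WI (\<lambda>\<tau>. G ((\<tau> - t) / \<phi>) * indicator {0..T} \<tau>) \<omega>"

end

theory Submission
  imports Defs
begin

primrec fdiff :: "real \<Rightarrow> nat \<Rightarrow> (real \<Rightarrow> real) \<Rightarrow> real \<Rightarrow> real" where
  "fdiff h 0 g t = g t"
| "fdiff h (Suc n) g t = fdiff h n (\<lambda>s. g (s + h) - g s) t"

lemma fdiff_bound:
  assumes "h > 0"
  shows "\<forall>(g::real\<Rightarrow>real) B a. (\<forall>s\<in>{a..a + real n * h}. \<bar>g s\<bar> \<le> B) \<longrightarrow> \<bar>fdiff h n g a\<bar> \<le> 2^n * B"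
proof (induction n)
  case 0
  then show ?case by auto
next
  case (Suc n)
  show ?case
  proof (intro allI impI)
    fix g :: "real \<Rightarrow> real" and B a assume H: "\<forall>s\<in>{a..a + real (Suc n) * h}. \<bar>g s\<bar> \<le> B"
    have "\<forall>s\<in>{a..a + real n * h}. \<bar>g (s + h) - g s\<bar> \<le> 2 * B"
    proof
      fix s assume "s \<in> {a..a + real n * h}"
      then have "s \<in> {a..a + real (Suc n) * h}" "s + h \<in> {a..a + real (Suc n) * h}"
        using assms by (auto simp: algebra_simps)
      then have "\<bar>g s\<bar> \<le> B" "\<bar>g (s + h)\<bar> \<le> B" using H by blast+
      then show "\<bar>g (s + h) - g s\<bar> \<le> 2 * B" by linarith
    qed
    then have "\<bar>fdiff h n (\<lambda>s. g (s + h) - g s) a\<bar> \<le> 2 ^ n * (2 * B)"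
      using Suc.IH[THEN spec[where x="\<lambda>s. g (s + h) - g s"], THEN spec[where x="2 * B"], THEN spec[where x=a]]
      by blast
    then show "\<bar>fdiff h (Suc n) g a\<bar> \<le> 2 ^ Suc n * B" by (simp add: algebra_simps)
  qed
qed

lemma fdiff_mvt:
  assumes "h > 0"
  shows "\<forall>D lo hi a. lo \<le> a \<longrightarrow> a + real n * h \<le> hi \<longrightarrow>
     (\<forall>j<n. \<forall>t\<in>{lo..hi}. (D j has_real_derivative D (Suc j) t) (at t within {lo..hi})) \<longrightarrow>
     (\<exists>\<xi>\<in>{a..a + real n * h}. fdiff h n (D 0) a = h^n * D n \<xi>)"
proof (induction n)
  case 0
  then show ?case by auto
next
  case (Suc n)
  show ?case
  proof (intro allI impI)
    fix D :: "nat \<Rightarrow> real \<Rightarrow> real" and lo hi a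
    assume lo: "lo \<le> a" and hi: "a + real (Suc n) * h \<le> hi"
      and der: "\<forall>j<Suc n. \<forall>t\<in>{lo..hi}. (D j has_real_derivative D (Suc j) t) (at t within {lo..hi})"
    define D' where "D' = (\<lambda>j s. D j (s + h) - D j s)"
    have der': "\<forall>j<n. \<forall>t\<in>{lo..hi - h}. (D' j has_real_derivative D' (Suc j) t) (at t within {lo..hi - h})"
    proof (intro allI impI ballI)
      fix j t assume j: "j < n" and t: "t \<in> {lo..hi - h}"
      have sub: "{lo..hi - h} \<subseteq> {lo..hi}" using assms by auto
      have t1: "t \<in> {lo..hi}" "t + h \<in> {lo..hi}" using t assms by auto
      have d1: "(D j has_real_derivative D (Suc j) t) (at t within {lo..hi - h})"
        using der j t1 sub by (meson DERIV_subset less_SucI)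
      have "(D j has_real_derivative D (Suc j) (t + h)) (at (t + h) within {lo..hi})"
        using der j t1 by auto
      then have "(D j has_real_derivative D (Suc j) (t + h)) (at (t + h) within (\<lambda>s. s + h) ` {lo..hi - h})"
        by (rule DERIV_subset) (use sub assms in auto)
      moreover have "((\<lambda>s. s + h) has_real_derivative 1) (at t within {lo..hi - h})"
        by (auto intro!: derivative_eq_intros)
      ultimately have d2: "((\<lambda>s. D j (s + h)) has_real_derivative D (Suc j) (t + h)) (at t within {lo..hi - h})"
        using DERIV_image_chain[of "D j" "D (Suc j) (t+h)" "\<lambda>s. s + h" t "{lo..hi - h}" 1]
        by (simp add: o_def)
      show "(D' j has_real_derivative D' (Suc j) t) (at t within {lo..hi - h})"
        unfolding D'_def by (rule DERIV_diff[OF d2 d1])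
    qed
    have "lo \<le> a" "a + real n * h \<le> hi - h" using lo hi by (auto simp: algebra_simps)
    then obtain \<xi> where
      \<xi>: "\<xi> \<in> {a..a + real n * h}" and eq: "fdiff h n (D' 0) a = h ^ n * D' n \<xi>"
      using Suc.IH[rule_format, of lo a "hi - h" D'] der' by blast
    have "\<exists>z\<in>{\<xi>..\<xi> + h}. D n (\<xi> + h) - D n \<xi> = (\<lambda>x. x * D (Suc n) z) (\<xi> + h - \<xi>)"
    proof (rule mvt_very_simple)
      show "\<xi> \<le> \<xi> + h" using assms by auto
      fix x assume "\<xi> \<le> x" "x \<le> \<xi> + h"
      then have x: "x \<in> {lo..hi}" and sub: "{\<xi>..\<xi> + h} \<subseteq> {lo..hi}" using \<xi> lo hi assms
        by (auto simp: algebra_simps)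
      have "(D n has_real_derivative D (Suc n) x) (at x within {lo..hi})" using der x by auto
      then have "(D n has_real_derivative D (Suc n) x) (at x within {\<xi>..\<xi> + h})"
        using DERIV_subset sub by blast
      then show "(D n has_derivative (\<lambda>y. y * D (Suc n) x)) (at x within {\<xi>..\<xi> + h})"
        by (simp add: has_field_derivative_def mult.commute[of _ "D (Suc n) x"])
    qed
    then obtain z where z: "z \<in> {\<xi>..\<xi> + h}" and zeq: "D n (\<xi> + h) - D n \<xi> = h * D (Suc n) z" by auto
    have "fdiff h (Suc n) (D 0) a = fdiff h n (D' 0) a" by (simp add: D'_def)
    also have "\<dots> = h ^ Suc n * D (Suc n) z" using eq zeq by (simp add: D'_def)
    finally show "\<exists>\<xi>\<in>{a..a + real (Suc n) * h}. fdiff h (Suc n) (D 0) a = h ^ Suc n * D (Suc n) \<xi>"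
      using z \<xi> by (intro bexI[of _ z]) (auto simp: algebra_simps)
  qed
qed

primrec bnd_seq :: "real \<Rightarrow> real \<Rightarrow> real \<Rightarrow> nat \<Rightarrow> real" where
  "bnd_seq c L1 T 0 = c + L1 * T"
| "bnd_seq c L1 T (Suc d) = c + bnd_seq c L1 T d * T"

lemma lip_from_deriv:
  fixes f f' :: "real \<Rightarrow> real"
  assumes "\<And>t. t \<in> {0..T} \<Longrightarrow> (f has_real_derivative f' t) (at t within {0..T})"
    and "\<And>t. t \<in> {0..T} \<Longrightarrow> \<bar>f' t\<bar> \<le> B" and "x \<in> {0..T}" "y \<in> {0..T}"
  shows "\<bar>f x - f y\<bar> \<le> B * \<bar>x - y\<bar>"
  using field_differentiable_bound[of "{0..T}" f f' B x y] assms by auto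

lemma deriv_bounds:
  assumes T: "T > 0" and m: "m \<ge> 1" and L: "L \<ge> 0" and L1: "L1 \<ge> 0"
  shows "\<exists>M. \<forall>D. (\<forall>t\<in>{0..T}. \<bar>D 0 t\<bar> \<le> L) \<longrightarrow>
     (\<forall>j<m. \<forall>t\<in>{0..T}. (D j has_real_derivative D (Suc j) t) (at t within {0..T})) \<longrightarrow>
     (\<forall>x\<in>{0..T}. \<forall>y\<in>{0..T}. \<bar>D m x - D m y\<bar> \<le> L1 * \<bar>x - y\<bar>) \<longrightarrow>
     (\<forall>j\<le>m. \<forall>t\<in>{0..T}. \<bar>D j t\<bar> \<le> M)"
proof -
  define h where "h = T / real m"
  have h: "h > 0" using T m by (simp add: h_def)
  define c where "c = (max 1 (2 / h)) ^ m * L"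
  define M where "M = (\<Sum>d\<le>m. \<bar>bnd_seq c L1 T d\<bar>)"
  show ?thesis
  proof (intro exI[of _ M] allI impI)
    fix D :: "nat \<Rightarrow> real \<Rightarrow> real"
    assume D0: "\<forall>t\<in>{0..T}. \<bar>D 0 t\<bar> \<le> L"
      and der: "\<forall>j<m. \<forall>t\<in>{0..T}. (D j has_real_derivative D (Suc j) t) (at t within {0..T})"
      and lip: "\<forall>x\<in>{0..T}. \<forall>y\<in>{0..T}. \<bar>D m x - D m y\<bar> \<le> L1 * \<bar>x - y\<bar>"
    have pt: "\<exists>\<xi>\<in>{0..T}. \<bar>D j \<xi>\<bar> \<le> c" if j: "j \<le> m" for j
    proof -
      have "real j * h \<le> real m * h" using j h by (intro mult_right_mono) auto
      also have "real m * h = T" using m by (simp add: h_def)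
      finally have jh: "0 + real j * h \<le> T" by simp
      have "\<exists>\<xi>\<in>{0..0 + real j * h}. fdiff h j (D 0) 0 = h ^ j * D j \<xi>"
        using fdiff_mvt[OF h, of j, rule_format, where D=D and lo=0 and hi=T and a=0] jh der j by auto
      then obtain \<xi> where \<xi>: "\<xi> \<in> {0..0 + real j * h}" and eq: "fdiff h j (D 0) 0 = h ^ j * D j \<xi>" by blast
      have "\<bar>fdiff h j (D 0) 0\<bar> \<le> 2 ^ j * L"
        using fdiff_bound[OF h, of j, rule_format, where g="D 0" and B=L and a=0] D0 jh by auto
      then have "h ^ j * \<bar>D j \<xi>\<bar> \<le> 2 ^ j * L" using eq h by (simp add: abs_mult)
      then have "\<bar>D j \<xi>\<bar> \<le> (2 / h) ^ j * L" using h
        by (simp add: field_simps power_divide)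
      also have "\<dots> \<le> (max 1 (2 / h)) ^ j * L"
        by (intro mult_right_mono power_mono L) (use h in auto)
      also have "\<dots> \<le> (max 1 (2 / h)) ^ m * L"
        by (intro mult_right_mono power_increasing L j) auto
      finally show ?thesis using \<xi> jh by (intro bexI[of _ \<xi>]) (auto simp: c_def)
    qed
    have main: "\<forall>t\<in>{0..T}. \<bar>D (m - d) t\<bar> \<le> bnd_seq c L1 T d" if "d \<le> m" for d
      using that
    proof (induction d)
      case 0
      obtain \<xi> where \<xi>: "\<xi> \<in> {0..T}" "\<bar>D m \<xi>\<bar> \<le> c" using pt by blast
      show ?case
      proof
        fix t assume t: "t \<in> {0..T}"
        have "\<bar>D m t - D m \<xi>\<bar> \<le> L1 * \<bar>t - \<xi>\<bar>" using lip t \<xi> by auto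
        also have "\<dots> \<le> L1 * T" using t \<xi> L1 by (intro mult_left_mono) auto
        finally show "\<bar>D (m - 0) t\<bar> \<le> bnd_seq c L1 T 0" using \<xi> by simp
      qed
    next
      case (Suc d)
      define j where "j = m - Suc d"
      have jm: "j < m" "Suc j = m - d" using Suc.prems by (auto simp: j_def)
      obtain \<xi> where \<xi>: "\<xi> \<in> {0..T}" "\<bar>D j \<xi>\<bar> \<le> c" using pt jm by (meson less_imp_le)
      have IH: "\<forall>t\<in>{0..T}. \<bar>D (Suc j) t\<bar> \<le> bnd_seq c L1 T d" using Suc jm by simp
      show ?case
      proof
        fix t assume t: "t \<in> {0..T}"
        have "\<bar>D j t - D j \<xi>\<bar> \<le> bnd_seq c L1 T d * \<bar>t - \<xi>\<bar>"
          by (rule lip_from_deriv[of T "D j" "D (Suc j)"]) (use der jm IH t \<xi> in auto)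
        also have "\<dots> \<le> bnd_seq c L1 T d * T"
          using t \<xi> IH by (intro mult_left_mono) (auto intro: order_trans[OF abs_ge_zero])
        finally show "\<bar>D (m - Suc d) t\<bar> \<le> bnd_seq c L1 T (Suc d)" using \<xi> by (simp add: j_def)
      qed
    qed
    fix j assume j: "j \<le> m"
    show "\<forall>t\<in>{0..T}. \<bar>D j t\<bar> \<le> M"
    proof
      fix t assume t: "t \<in> {0..T}"
      have "\<bar>D (m - (m - j)) t\<bar> \<le> bnd_seq c L1 T (m - j)" using main[of "m - j"] t by auto
      also have "\<dots> \<le> \<bar>bnd_seq c L1 T (m - j)\<bar>" by simp
      also have "\<dots> \<le> M" unfolding M_def
        by (rule member_le_sum[of "m - j" "{..m}" "\<lambda>d. \<bar>bnd_seq c L1 T d\<bar>"]) auto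
      finally show "\<bar>D j t\<bar> \<le> M" using j by simp
    qed
  qed
qed

fun xder :: "(nat \<Rightarrow> real \<Rightarrow> real) \<Rightarrow> (real \<Rightarrow> real) \<Rightarrow> nat \<Rightarrow> real \<Rightarrow> real" where
  "xder D x 0 t = x t"
| "xder D x (Suc n) t = (\<Sum>i\<le>n. real (n choose i) * D i t * xder D x (n - i) t)"

lemma leibniz_identity:
  fixes a b :: "nat \<Rightarrow> real"
  shows "(\<Sum>i\<le>j. real (j choose i) * (a (Suc i) * b (j - i) + a i * b (Suc (j - i))))
       = (\<Sum>i\<le>Suc j. real (Suc j choose i) * a i * b (Suc j - i))"
proof -
  have R: "(\<Sum>i\<le>Suc j. real (Suc j choose i) * a i * b (Suc j - i))
     = a 0 * b (Suc j) + (\<Sum>i\<le>j. real (j choose i) * a (Suc i) * b (j - i))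
        + (\<Sum>i\<le>j. real (j choose Suc i) * a (Suc i) * b (j - i))"
    apply (subst sum.atMost_Suc_shift)
    apply (simp add: sum.distrib[symmetric] algebra_simps)
    done
  have L2: "(\<Sum>i\<le>j. real (j choose i) * a i * b (Suc (j - i)))
     = a 0 * b (Suc j) + (\<Sum>i\<le>j. real (j choose Suc i) * a (Suc i) * b (j - i))"
  proof -
    have "(\<Sum>i\<le>j. real (j choose i) * a i * b (Suc (j - i)))
        = (\<Sum>i<Suc j. real (j choose i) * a i * b (Suc (j - i)))"
      by (simp add: lessThan_Suc_atMost)
    also have "\<dots> = a 0 * b (Suc j) + (\<Sum>i<j. real (j choose Suc i) * a (Suc i) * b (Suc (j - Suc i)))"
      by (subst sum.lessThan_Suc_shift) (simp del: sum.lessThan_Suc)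
    also have "(\<Sum>i<j. real (j choose Suc i) * a (Suc i) * b (Suc (j - Suc i)))
        = (\<Sum>i<j. real (j choose Suc i) * a (Suc i) * b (j - i))"
      by (intro sum.cong) (auto simp: Suc_diff_Suc)
    also have "\<dots> = (\<Sum>i\<le>j. real (j choose Suc i) * a (Suc i) * b (j - i))"
      by (simp add: lessThan_Suc_atMost[symmetric])
    finally show ?thesis .
  qed
  show ?thesis
    unfolding R using L2 by (simp add: sum.distrib algebra_simps)
qed

lemma leibniz_step:
  fixes U V :: "nat \<Rightarrow> real \<Rightarrow> real"
  assumes U: "\<forall>j<N. \<forall>t\<in>S. (U j has_real_derivative U (Suc j) t) (at t within S)"
    and V: "\<forall>j<N. \<forall>t\<in>S. (V j has_real_derivative V (Suc j) t) (at t within S)"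
    and j: "j < N" and t: "t \<in> S"
  shows "((\<lambda>s. \<Sum>i\<le>j. real (j choose i) * U i s * V (j - i) s) has_real_derivative
          (\<Sum>i\<le>Suc j. real (Suc j choose i) * U i t * V (Suc j - i) t)) (at t within S)"
proof -
  have "((\<lambda>s. \<Sum>i\<le>j. real (j choose i) * U i s * V (j - i) s) has_real_derivative
          (\<Sum>i\<le>j. real (j choose i) * (U (Suc i) t * V (j - i) t + U i t * V (Suc (j - i)) t))) (at t within S)"
  proof (rule DERIV_sum)
    fix i assume i: "i \<in> {..j}"
    have "(U i has_real_derivative U (Suc i) t) (at t within S)" using U i j t by auto
    moreover have "(V (j - i) has_real_derivative V (Suc (j - i)) t) (at t within S)" using V i j t by auto
    ultimately show "((\<lambda>s. real (j choose i) * U i s * V (j - i) s) has_real_derivative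
        real (j choose i) * (U (Suc i) t * V (j - i) t + U i t * V (Suc (j - i)) t)) (at t within S)"
      by (auto intro!: derivative_eq_intros simp: algebra_simps)
  qed
  then show ?thesis using leibniz_identity[of j "\<lambda>i. U i t" "\<lambda>i. V i t"] by simp
qed

lemma xder_deriv:
  assumes D: "\<forall>j<m. \<forall>t\<in>S. (D j has_real_derivative D (Suc j) t) (at t within S)"
    and x: "\<forall>t\<in>S. (x has_real_derivative D 0 t * x t) (at t within S)"
  shows "N \<le> Suc m \<Longrightarrow> \<forall>n<N. \<forall>t\<in>S. (xder D x n has_real_derivative xder D x (Suc n) t) (at t within S)"
proof (induction N)
  case 0
  then show ?case by simp
next
  case (Suc N)
  then have IH: "\<forall>n<N. \<forall>t\<in>S. (xder D x n has_real_derivative xder D x (Suc n) t) (at t within S)" by simp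
  have new: "\<forall>t\<in>S. (xder D x N has_real_derivative xder D x (Suc N) t) (at t within S)"
  proof (cases N)
    case 0
    have "xder D x 0 = x" by (simp add: fun_eq_iff)
    then show ?thesis using x 0 by (simp add: mult.commute)
  next
    case (Suc N')
    have DN: "\<forall>j<N. \<forall>t\<in>S. (D j has_real_derivative D (Suc j) t) (at t within S)"
      using D Suc.prems by auto
    show ?thesis
    proof
      fix t assume t: "t \<in> S"
      have eq: "xder D x N = (\<lambda>s. \<Sum>i\<le>N'. real (N' choose i) * D i s * xder D x (N' - i) s)"
        using Suc by (auto simp: fun_eq_iff)
      show "(xder D x N has_real_derivative xder D x (Suc N) t) (at t within S)"
        unfolding eq using leibniz_step[OF DN IH, of N' t] t Suc by simp
    qed
  qed
  show ?case using IH new by (auto simp: less_Suc_eq)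
qed

primrec bx :: "real \<Rightarrow> real \<Rightarrow> nat \<Rightarrow> real" where
  "bx M X 0 = X"
| "bx M X (Suc n) = M * 2^n * bx M X n + bx M X n"

lemma bx_nonneg: "M \<ge> 0 \<Longrightarrow> X \<ge> 0 \<Longrightarrow> bx M X n \<ge> 0"
  by (induction n) auto

lemma bx_mono: assumes "M \<ge> 0" "X \<ge> 0" "i \<le> n" shows "bx M X i \<le> bx M X n"
proof -
  have "bx M X n \<le> bx M X (Suc n)" for n using bx_nonneg[OF assms(1,2), of n] assms by simp
  then show ?thesis using lift_Suc_mono_le[of "bx M X"] assms(3) by blast
qed

lemma xder_bound:
  assumes M: "M \<ge> 0" and X: "X \<ge> 0"
    and Db: "\<forall>j\<le>m. \<forall>t\<in>S. \<bar>D j t\<bar> \<le> M" and xb: "\<forall>t\<in>S. \<bar>x t\<bar> \<le> X"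
  shows "n \<le> Suc m \<Longrightarrow> \<forall>t\<in>S. \<bar>xder D x n t\<bar> \<le> bx M X n"
proof (induction n rule: less_induct)
  case (less n)
  show ?case
  proof (cases n)
    case 0
    then show ?thesis using xb by simp
  next
    case (Suc n')
    show ?thesis
    proof
      fix t assume t: "t \<in> S"
      have "\<bar>xder D x n t\<bar> \<le> (\<Sum>i\<le>n'. \<bar>real (n' choose i) * D i t * xder D x (n' - i) t\<bar>)"
        using Suc by (simp add: sum_abs)
      also have "\<dots> \<le> (\<Sum>i\<le>n'. real (n' choose i) * (M * bx M X n'))"
      proof (rule sum_mono)
        fix i assume i: "i \<in> {..n'}"
        have "\<bar>D i t\<bar> \<le> M" using Db i Suc less.prems t by auto
        moreover have "\<bar>xder D x (n' - i) t\<bar> \<le> bx M X (n' - i)"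
          using less.IH[of "n' - i"] Suc less.prems t by auto
        moreover have "bx M X (n' - i) \<le> bx M X n'" by (rule bx_mono[OF M X]) auto
        ultimately have "\<bar>D i t\<bar> * \<bar>xder D x (n' - i) t\<bar> \<le> M * bx M X n'"
          by (intro mult_mono) auto
        then show "\<bar>real (n' choose i) * D i t * xder D x (n' - i) t\<bar> \<le> real (n' choose i) * (M * bx M X n')"
          by (simp add: abs_mult mult.assoc mult_left_mono)
      qed
      also have "\<dots> = M * 2 ^ n' * bx M X n'"
        using choose_row_sum[of n'] by (simp add: sum_distrib_right[symmetric] flip: of_nat_sum)
      also have "\<dots> \<le> bx M X n" using Suc bx_nonneg[OF M X, of n'] by simp
      finally show "\<bar>xder D x n t\<bar> \<le> bx M X n" .
    qed
  qed
qed

lemma integrable_bounded_support: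
  fixes h :: "real \<Rightarrow> real"
  assumes "h \<in> borel_measurable borel" "\<And>u. u \<in> {A..B} \<Longrightarrow> \<bar>h u\<bar> \<le> C"
    "\<And>u. u \<notin> {A..B} \<Longrightarrow> h u = 0"
  shows "integrable lborel h"
  by (rule integrableI_bounded_set[where A="{A..B}" and B=C]) (use assms in \<open>auto simp: emeasure_lborel_Icc_eq\<close>)

lemma bias_abstract:
  fixes G f :: "real \<Rightarrow> real" and c :: "nat \<Rightarrow> real"
  assumes Gm: "G \<in> borel_measurable borel" and K: "\<And>u. \<bar>G u\<bar> \<le> K"
    and AB: "A < 0" "0 < B" and supp: "\<And>u. u \<notin> {A..B} \<Longrightarrow> G u = 0"
    and int1: "(LINT u|lborel. G u) = 1"
    and mom: "\<forall>j\<in>{1..k}. (LINT u|lborel. u ^ j * G u) = 0"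
    and phi: "\<phi> > 0" and Cr: "Cr \<ge> 0"
    and fm: "(\<lambda>u. indicator {A..B} u * f (t + \<phi> * u)) \<in> borel_measurable borel"
    and rem: "\<And>u. u \<in> {A..B} \<Longrightarrow> \<bar>f (t + \<phi> * u) - (\<Sum>j\<le>k. c j * (\<phi> * u) ^ j)\<bar> \<le> Cr * \<bar>\<phi> * u\<bar> ^ (Suc k)"
  shows "\<bar>(LINT u|lborel. G u * f (t + \<phi> * u)) - c 0\<bar>
           \<le> K * Cr * (\<phi> * max (- A) B) ^ (Suc k) * (B - A)"
proof -
  define \<Lambda> where "\<Lambda> = max (- A) B"
  have Lam: "\<And>u. u \<in> {A..B} \<Longrightarrow> \<bar>u\<bar> \<le> \<Lambda>" by (auto simp: \<Lambda>_def)
  have K0: "K \<ge> 0" using K[of 0] by linarith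
  define p where "p = (\<lambda>u. \<Sum>j\<le>k. c j * (\<phi> * u) ^ j)"
  have Gz: "G u * f (t + \<phi> * u) = G u * (indicator {A..B} u * f (t + \<phi> * u))" for u
    using supp[of u] by (cases "u \<in> {A..B}") auto
  have mj: "integrable lborel (\<lambda>u. u ^ j * G u)" for j
  proof (rule integrable_bounded_support[where A=A and B=B and C="\<Lambda> ^ j * K"])
    show "(\<lambda>u. u ^ j * G u) \<in> borel_measurable borel" using Gm by measurable
    fix u assume u: "u \<in> {A..B}"
    have "\<bar>u\<bar> ^ j \<le> \<Lambda> ^ j" using Lam[OF u] by (intro power_mono) auto
    then show "\<bar>u ^ j * G u\<bar> \<le> \<Lambda> ^ j * K" using K[of u] K0
      by (simp add: abs_mult power_abs) (intro mult_mono, use AB in \<open>auto simp: \<Lambda>_def\<close>)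
  qed (use supp in auto)
  have ip: "integrable lborel (\<lambda>u. G u * p u)"
  proof -
    have "(\<lambda>u. G u * p u) = (\<lambda>u. \<Sum>j\<le>k. c j * \<phi> ^ j * (u ^ j * G u))"
      by (auto simp: p_def sum_distrib_left fun_eq_iff power_mult_distrib algebra_simps)
    then show ?thesis using mj by simp
  qed
  have Ip: "(LINT u|lborel. G u * p u) = c 0"
  proof -
    have "(LINT u|lborel. G u * p u) = (LINT u|lborel. (\<Sum>j\<le>k. c j * \<phi> ^ j * (u ^ j * G u)))"
      by (auto simp: p_def sum_distrib_left power_mult_distrib algebra_simps intro!: Bochner_Integration.integral_cong)
    also have "\<dots> = (\<Sum>j\<le>k. c j * \<phi> ^ j * (LINT u|lborel. u ^ j * G u))"
      using mj by (simp add: Bochner_Integration.integral_sum)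
    also have "\<dots> = (\<Sum>j\<in>{0}. c j * \<phi> ^ j * (LINT u|lborel. u ^ j * G u))"
      using mom by (intro sum.mono_neutral_right) auto
    also have "\<dots> = c 0" using int1 by simp
    finally show ?thesis .
  qed
  define Q where "Q = K * Cr * (\<phi> * \<Lambda>) ^ (Suc k)"
  have rb: "\<bar>G u * (f (t + \<phi> * u) - p u)\<bar> \<le> indicator {A..B} u * Q" for u
  proof (cases "u \<in> {A..B}")
    case True
    have "\<bar>\<phi> * u\<bar> ^ Suc k \<le> (\<phi> * \<Lambda>) ^ Suc k"
      using Lam[OF True] phi by (intro power_mono) (auto simp: abs_mult)
    then have "\<bar>f (t + \<phi> * u) - p u\<bar> \<le> Cr * (\<phi> * \<Lambda>) ^ Suc k"
      using rem[OF True] Cr unfolding p_def by (meson mult_left_mono order_trans)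
    then show ?thesis using True K[of u] K0 by (simp add: Q_def abs_mult mult_mono mult.assoc)
  next
    case False
    then show ?thesis using supp[of u] by simp
  qed
  have mr: "(\<lambda>u. G u * (f (t + \<phi> * u) - p u)) \<in> borel_measurable borel"
  proof -
    have "(\<lambda>u. G u * (f (t + \<phi> * u) - p u)) = (\<lambda>u. G u * (indicator {A..B} u * f (t + \<phi> * u)) - G u * p u)"
      using Gz by (auto simp: fun_eq_iff algebra_simps)
    then show ?thesis using Gm fm ip by (simp add: borel_measurable_integrable)
  qed
  have ir: "integrable lborel (\<lambda>u. G u * (f (t + \<phi> * u) - p u))"
  proof (rule integrable_bounded_support[where A=A and B=B and C=Q])
    show "\<And>u. u \<in> {A..B} \<Longrightarrow> \<bar>G u * (f (t + \<phi> * u) - p u)\<bar> \<le> Q" using rb by (metis indicator_simps(1) mult_1)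
  qed (use mr supp in auto)
  have split: "(\<lambda>u. G u * f (t + \<phi> * u)) = (\<lambda>u. G u * p u + G u * (f (t + \<phi> * u) - p u))"
    by (auto simp: fun_eq_iff algebra_simps)
  have "(LINT u|lborel. G u * f (t + \<phi> * u)) - c 0 = (LINT u|lborel. G u * (f (t + \<phi> * u) - p u))"
    unfolding split using ip ir Ip by simp
  also have "\<bar>\<dots>\<bar> \<le> (LINT u|lborel. \<bar>G u * (f (t + \<phi> * u) - p u)\<bar>)"
    by (rule integral_abs_bound)
  also have "\<dots> \<le> (LINT u|lborel. indicator {A..B} u * Q)"
    using ir rb integrable_bounded_support[of "indicator {A..B}" A B 1] by (intro integral_mono) auto
  also have "\<dots> = Q * (B - A)" using AB by simp
  finally show ?thesis by (simp add: Q_def \<Lambda>_def)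
qed

lemma theta_unfold:
  assumes "\<theta> \<in> Theta_class T m L L1" "m \<ge> 1"
  obtains D where "\<forall>t\<in>{0..T}. D 0 t = \<theta> t" "\<forall>t\<in>{0..T}. \<bar>\<theta> t\<bar> \<le> L"
    "\<forall>j<m. \<forall>t\<in>{0..T}. (D j has_real_derivative D (Suc j) t) (at t within {0..T})"
    "\<forall>x\<in>{0..T}. \<forall>y\<in>{0..T}. \<bar>D m x - D m y\<bar> \<le> L1 * \<bar>x - y\<bar>"
    "continuous_on {0..T} \<theta>"
proof -
  from assms(1) have thD: "(\<forall>t\<in>{0..T}. \<bar>\<theta> t\<bar> \<le> L) \<and> (\<exists>D :: nat \<Rightarrow> real \<Rightarrow> real.
        (\<forall>t\<in>{0..T}. D 0 t = \<theta> t) \<and>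
        (\<forall>j<m. \<forall>t\<in>{0..T}. (D j has_real_derivative D (Suc j) t) (at t within {0..T})) \<and>
        (\<forall>x\<in>{0..T}. \<forall>y\<in>{0..T}. \<bar>D m x - D m y\<bar> \<le> L1 * \<bar>x - y\<bar>))"
    unfolding Theta_class_def mem_Collect_eq .
  then have th: "\<forall>t\<in>{0..T}. \<bar>\<theta> t\<bar> \<le> L" by (rule conjunct1)
  from thD[THEN conjunct2] obtain D where D0: "\<forall>t\<in>{0..T}. D 0 t = \<theta> t"
    and D3: "\<forall>j<m. \<forall>t\<in>{0..T}. (D j has_real_derivative D (Suc j) t) (at t within {0..T})"
    and D4: "\<forall>x\<in>{0..T}. \<forall>y\<in>{0..T}. \<bar>D m x - D m y\<bar> \<le> L1 * \<bar>x - y\<bar>"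
    by (elim exE conjE)
  note D = D0 th D3 D4
  have "continuous_on {0..T} (D 0)"
    by (rule DERIV_continuous_on[of _ _ "D (Suc 0)"]) (use D(3) assms(2) in auto)
  moreover have "\<And>x. x \<in> {0..T} \<Longrightarrow> D 0 x = \<theta> x" using D0 by blast
  ultimately have "continuous_on {0..T} \<theta>" using continuous_on_cong[of "{0..T}" "{0..T}" "D 0" \<theta>] by blast
  then show ?thesis by (rule that[OF D0 th D3 D4])
qed

lemma detsol_facts:
  assumes cont: "continuous_on {0..T} \<theta>" and bd: "\<forall>t\<in>{0..T}. \<bar>\<theta> t\<bar> \<le> L" and L: "L \<ge> 0"
  shows "\<forall>t\<in>{0..T}. (det_sol x0 \<theta> has_real_derivative \<theta> t * det_sol x0 \<theta> t) (at t within {0..T})"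
    and "\<forall>t\<in>{0..T}. \<bar>det_sol x0 \<theta> t\<bar> \<le> \<bar>x0\<bar> * exp (L * T)"
proof -
  show "\<forall>t\<in>{0..T}. (det_sol x0 \<theta> has_real_derivative \<theta> t * det_sol x0 \<theta> t) (at t within {0..T})"
  proof
    fix t assume t: "t \<in> {0..T}"
    have "((\<lambda>u. integral {0..u} \<theta>) has_real_derivative \<theta> t) (at t within {0..T})"
      using integral_has_vector_derivative[OF cont t] by (simp add: has_real_derivative_iff_has_vector_derivative)
    then have "((\<lambda>u. x0 * exp (integral {0..u} \<theta>)) has_real_derivative x0 * (exp (integral {0..t} \<theta>) * \<theta> t)) (at t within {0..T})"
      by (auto intro!: derivative_eq_intros)
    then show "(det_sol x0 \<theta> has_real_derivative \<theta> t * det_sol x0 \<theta> t) (at t within {0..T})"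
      unfolding det_sol_def[abs_def] by (simp add: algebra_simps)
  qed
  show "\<forall>t\<in>{0..T}. \<bar>det_sol x0 \<theta> t\<bar> \<le> \<bar>x0\<bar> * exp (L * T)"
  proof
    fix t assume t: "t \<in> {0..T}"
    have "continuous_on {0..t} \<theta>" using t by (intro continuous_on_subset[OF cont]) auto
    then have "norm (integral {0..t} \<theta>) \<le> L * (t - 0)"
      using integral_bound[of 0 t \<theta> L] t bd by auto
    also have "\<dots> \<le> L * T" using t L by (intro mult_left_mono) auto
    finally have "integral {0..t} \<theta> \<le> L * T" by simp
    then show "\<bar>det_sol x0 \<theta> t\<bar> \<le> \<bar>x0\<bar> * exp (L * T)"
      by (simp add: det_sol_def abs_mult mult_left_mono)
  qed
qed

lemma kernel_unfold:
  assumes "kernel_ok k G"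
  obtains K A B where "G \<in> borel_measurable borel" "\<And>u. \<bar>G u\<bar> \<le> K" "A < 0" "0 < B"
    "\<And>u. u \<notin> {A..B} \<Longrightarrow> G u = 0" "(LINT u|lborel. G u) = 1"
    "\<forall>j\<in>{1..k}. (LINT u|lborel. u ^ j * G u) = 0"
  using assms unfolding kernel_ok_def by blast

lemma conv_integral:
  fixes G g :: "real \<Rightarrow> real"
  assumes Gm: "G \<in> borel_measurable borel" and K: "\<And>u. \<bar>G u\<bar> \<le> K"
    and supp: "\<And>u. u \<notin> {A..B} \<Longrightarrow> G u = 0"
    and gc: "continuous_on {0..T} g" and gb: "\<And>s. s \<in> {0..T} \<Longrightarrow> \<bar>g s\<bar> \<le> Cg"
    and phi: "\<phi> > 0" and W: "\<And>u. u \<in> {A..B} \<Longrightarrow> t + \<phi> * u \<in> {0..T}"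
  shows "(\<lambda>\<tau>. G ((\<tau> - t) / \<phi>) * g \<tau>) integrable_on {0..T}"
    and "integral {0..T} (\<lambda>\<tau>. G ((\<tau> - t) / \<phi>) * g \<tau>) = \<phi> * (LINT u|lborel. G u * g (t + \<phi> * u))"
proof -
  define gi where "gi = (\<lambda>s. indicator {0..T} s * g s)"
  have gim: "gi \<in> borel_measurable borel"
    unfolding gi_def using borel_measurable_continuous_on_indicator[OF _ gc] by simp
  define hi where "hi = (\<lambda>\<tau>. G ((\<tau> - t) / \<phi>) * gi \<tau>)"
  have Gc: "(\<lambda>\<tau>. G ((\<tau> - t) / \<phi>)) \<in> borel_measurable borel"
    using Gm by measurable
  have him: "hi \<in> borel_measurable borel" unfolding hi_def using Gc gim by measurable
  have "integrable lborel hi"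
  proof (rule integrable_bounded_support[where A=0 and B=T and C="K * Cg"])
    fix u assume u: "u \<in> {0..T}"
    have "\<bar>G ((u - t) / \<phi>)\<bar> \<le> K" by (rule K)
    moreover have "\<bar>gi u\<bar> \<le> Cg" using gb[OF u] u by (simp add: gi_def)
    ultimately show "\<bar>hi u\<bar> \<le> K * Cg" unfolding hi_def abs_mult
      by (meson abs_ge_zero mult_mono order_trans)
  qed (use him in \<open>auto simp: hi_def gi_def\<close>)
  moreover have hi_eq: "hi = (\<lambda>\<tau>. indicator {0..T} \<tau> *\<^sub>R (G ((\<tau> - t) / \<phi>) * g \<tau>))"
    by (auto simp: hi_def gi_def fun_eq_iff)
  ultimately have si: "set_integrable lborel {0..T} (\<lambda>\<tau>. G ((\<tau> - t) / \<phi>) * g \<tau>)"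
    unfolding set_integrable_def by simp
  show "(\<lambda>\<tau>. G ((\<tau> - t) / \<phi>) * g \<tau>) integrable_on {0..T}"
    using set_borel_integral_eq_integral(1)[OF si] .
  have "integral {0..T} (\<lambda>\<tau>. G ((\<tau> - t) / \<phi>) * g \<tau>) = (LINT \<tau>|lborel. hi \<tau>)"
    using set_borel_integral_eq_integral(2)[OF si] unfolding set_lebesgue_integral_def hi_eq by simp
  also have "\<dots> = \<bar>\<phi>\<bar> * (LINT u|lborel. hi (t + \<phi> * u))"
    using lborel_integral_real_affine[of \<phi> hi t] phi by simp
  also have "(\<lambda>u. hi (t + \<phi> * u)) = (\<lambda>u. G u * g (t + \<phi> * u))"
  proof
    fix u show "hi (t + \<phi> * u) = G u * g (t + \<phi> * u)"
    proof (cases "u \<in> {A..B}")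
      case True
      then show ?thesis using W[OF True] phi by (simp add: hi_def gi_def)
    next
      case False
      then show ?thesis using supp[OF False] phi by (simp add: hi_def gi_def)
    qed
  qed
  finally show "integral {0..T} (\<lambda>\<tau>. G ((\<tau> - t) / \<phi>) * g \<tau>) = \<phi> * (LINT u|lborel. G u * g (t + \<phi> * u))"
    using phi by simp
qed

lemma bias_bound:
  assumes T: "T > 0" and L: "L \<ge> 0" and L1: "L1 \<ge> 0"
    and G: "kernel_ok k G" and a: "0 < a" and ab: "a \<le> b" "b < T"
  shows "\<exists>Cb \<phi>0. \<phi>0 > 0 \<and> (\<forall>\<theta>\<in>Theta_class T (Suc k) L L1. \<forall>\<phi>. 0 < \<phi> \<longrightarrow> \<phi> < \<phi>0 \<longrightarrow>
     (\<forall>t\<in>{a..b}. \<bar>(1 / \<phi>) * integral {0..T} (\<lambda>\<tau>. G ((\<tau> - t) / \<phi>) * \<theta> \<tau> * det_sol x0 \<theta> \<tau>)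
                    - \<theta> t * det_sol x0 \<theta> t\<bar> \<le> Cb * \<phi> ^ Suc k))"
proof -
  obtain K A B where Gm: "G \<in> borel_measurable borel" and K: "\<And>u. \<bar>G u\<bar> \<le> K"
    and AB: "A < 0" "0 < B" and supp: "\<And>u. u \<notin> {A..B} \<Longrightarrow> G u = 0"
    and int1: "(LINT u|lborel. G u) = 1" and mom: "\<forall>j\<in>{1..k}. (LINT u|lborel. u ^ j * G u) = 0"
    using kernel_unfold[OF G] by blast
  obtain M0 where M0: "\<forall>D. (\<forall>t\<in>{0..T}. \<bar>D 0 t\<bar> \<le> L) \<longrightarrow>
     (\<forall>j<Suc k. \<forall>t\<in>{0..T}. (D j has_real_derivative D (Suc j) t) (at t within {0..T})) \<longrightarrow>
     (\<forall>x\<in>{0..T}. \<forall>y\<in>{0..T}. \<bar>D (Suc k) x - D (Suc k) y\<bar> \<le> L1 * \<bar>x - y\<bar>) \<longrightarrow>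
     (\<forall>j\<le>Suc k. \<forall>t\<in>{0..T}. \<bar>D j t\<bar> \<le> M0)"
    using deriv_bounds[OF T _ L L1, of "Suc k"] by auto
  define M where "M = max M0 0"
  define X where "X = \<bar>x0\<bar> * exp (L * T)"
  have M: "M \<ge> 0" and X: "X \<ge> 0" by (auto simp: M_def X_def)
  define Bk where "Bk = bx M X (Suc (Suc k))"
  have Bk: "Bk \<ge> 0" unfolding Bk_def by (rule bx_nonneg[OF M X])
  define \<phi>0 where "\<phi>0 = min (a / (- A)) ((T - b) / B)"
  have \<phi>0: "\<phi>0 > 0" using a AB ab by (auto simp: \<phi>0_def divide_pos_neg)
  define Cb where "Cb = K * Bk * (max (- A) B) ^ Suc k * (B - A)"
  show ?thesis
  proof (rule exI[of _ Cb], rule exI[of _ \<phi>0], intro conjI \<phi>0 ballI allI impI)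
    fix \<theta> \<phi> t assume th: "\<theta> \<in> Theta_class T (Suc k) L L1" and phi: "0 < \<phi>" "\<phi> < \<phi>0"
      and t: "t \<in> {a..b}"
    obtain D where D0: "\<forall>t\<in>{0..T}. D 0 t = \<theta> t" and thb: "\<forall>t\<in>{0..T}. \<bar>\<theta> t\<bar> \<le> L"
      and Dd: "\<forall>j<Suc k. \<forall>t\<in>{0..T}. (D j has_real_derivative D (Suc j) t) (at t within {0..T})"
      and Dl: "\<forall>x\<in>{0..T}. \<forall>y\<in>{0..T}. \<bar>D (Suc k) x - D (Suc k) y\<bar> \<le> L1 * \<bar>x - y\<bar>"
      and thc: "continuous_on {0..T} \<theta>"
      using theta_unfold[OF th] by auto
    have Db: "\<forall>j\<le>Suc k. \<forall>s\<in>{0..T}. \<bar>D j s\<bar> \<le> M"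
    proof -
      have "\<forall>t\<in>{0..T}. \<bar>D 0 t\<bar> \<le> L" using D0 thb by simp
      then have "\<forall>j\<le>Suc k. \<forall>t\<in>{0..T}. \<bar>D j t\<bar> \<le> M0"
        using M0[THEN spec[where x=D]] Dd Dl by (elim impE) (assumption+)
      then show ?thesis unfolding M_def by (meson max.coboundedI1)
    qed
    define x where "x = det_sol x0 \<theta>"
    have xd0: "\<forall>s\<in>{0..T}. (x has_real_derivative \<theta> s * x s) (at s within {0..T})"
      and xb: "\<forall>s\<in>{0..T}. \<bar>x s\<bar> \<le> X"
      using detsol_facts[OF thc thb L, of x0] by (auto simp: x_def X_def)
    have xd: "\<forall>s\<in>{0..T}. (x has_real_derivative D 0 s * x s) (at s within {0..T})"
      using xd0 D0 by auto
    define E where "E = xder D x"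
    have Ed: "\<forall>n<Suc (Suc k). \<forall>s\<in>{0..T}. (E n has_real_derivative E (Suc n) s) (at s within {0..T})"
      using xder_deriv[OF Dd xd, of "Suc (Suc k)"] by (simp add: E_def)
    have Eb: "\<forall>s\<in>{0..T}. \<bar>E (Suc (Suc k)) s\<bar> \<le> Bk"
      using xder_bound[OF M X Db xb, of "Suc (Suc k)"] by (simp add: E_def Bk_def)
    have E1: "\<forall>s\<in>{0..T}. E 1 s = \<theta> s * x s" using D0 by (simp add: E_def)
    have phia: "\<phi> * (- A) < a" and phib: "\<phi> * B < T - b"
    proof -
      have "\<phi> < a / (- A)" using phi by (simp add: \<phi>0_def)
      then show "\<phi> * (- A) < a" using AB by (simp add: field_simps)
      have "\<phi> < (T - b) / B" using phi by (simp add: \<phi>0_def)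
      then show "\<phi> * B < T - b" using AB by (simp add: field_simps)
    qed
    have lo: "0 < t + A * \<phi>" using phia t by (simp add: algebra_simps)
    have hi: "t + B * \<phi> < T" using phib t by (simp add: algebra_simps)
    have tin: "t \<in> {0..T}" using t a ab by auto
    have W: "t + \<phi> * u \<in> {0..T}" if "u \<in> {A..B}" for u
    proof -
      have "A * \<phi> \<le> u * \<phi>" "u * \<phi> \<le> B * \<phi>" using that phi by (auto intro: mult_right_mono)
      then show ?thesis using lo hi by (auto simp: algebra_simps)
    qed
    define c where "c = (\<lambda>j. E (Suc j) t / fact j)"
    define f where "f = (\<lambda>s. \<theta> s * x s)"
    have rem: "\<bar>f (t + \<phi> * u) - (\<Sum>j\<le>k. c j * (\<phi> * u) ^ j)\<bar> \<le> Bk * \<bar>\<phi> * u\<bar> ^ Suc k"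
      if u: "u \<in> {A..B}" for u
    proof (cases "u = 0")
      case True
      have "(\<Sum>j\<le>k. c j * (\<phi> * u) ^ j) = (\<Sum>j\<in>{0}. c j * (\<phi> * u) ^ j)"
        using True by (intro sum.mono_neutral_right) auto
      then show ?thesis using True E1 tin by (simp add: c_def f_def)
    next
      case False
      define \<tau> where "\<tau> = t + \<phi> * u"
      have \<tau>ne: "\<tau> \<noteq> t" using False phi by (simp add: \<tau>_def)
      have \<tau>in: "t + A * \<phi> \<le> \<tau>" "\<tau> \<le> t + B * \<phi>"
      proof -
        have "A * \<phi> \<le> u * \<phi>" "u * \<phi> \<le> B * \<phi>" using u phi by (auto intro: mult_right_mono)
        then show "t + A * \<phi> \<le> \<tau>" "\<tau> \<le> t + B * \<phi>" by (auto simp: \<tau>_def algebra_simps)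
      qed
      have der: "\<forall>m s. m < Suc k \<and> t + A * \<phi> \<le> s \<and> s \<le> t + B * \<phi> \<longrightarrow>
                   DERIV ((\<lambda>j. E (Suc j)) m) s :> (\<lambda>j. E (Suc j)) (Suc m) s"
      proof (intro allI impI)
        fix m s assume ms: "m < Suc k \<and> t + A * \<phi> \<le> s \<and> s \<le> t + B * \<phi>"
        then have sint: "s \<in> interior {0..T}" using lo hi by auto
        have "(E (Suc m) has_real_derivative E (Suc (Suc m)) s) (at s within {0..T})"
          using Ed ms sint interior_subset by fastforce
        then show "DERIV ((\<lambda>j. E (Suc j)) m) s :> (\<lambda>j. E (Suc j)) (Suc m) s"
          using at_within_interior[OF sint] by simp
      qed
      have tA: "t + A * \<phi> \<le> t" "t \<le> t + B * \<phi>" using AB phi by (auto simp: mult_nonpos_nonneg)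
      obtain \<xi> where \<xi>: "(if \<tau> < t then \<tau> < \<xi> \<and> \<xi> < t else t < \<xi> \<and> \<xi> < \<tau>)"
        and tay: "E 1 \<tau> = (\<Sum>m<Suc k. (E (Suc m) t / fact m) * (\<tau> - t) ^ m)
                     + (E (Suc (Suc k)) \<xi> / fact (Suc k)) * (\<tau> - t) ^ Suc k"
        using Taylor[of "Suc k" "\<lambda>j. E (Suc j)" "E 1" "t + A * \<phi>" "t + B * \<phi>" t \<tau>, OF _ _ der tA \<tau>in \<tau>ne]
        by auto
      have \<xi>in: "\<xi> \<in> {0..T}" using \<xi> \<tau>in lo hi tA by (auto split: if_splits)
      have \<tau>T: "\<tau> \<in> {0..T}" using W[OF u] by (simp add: \<tau>_def)
      have "f \<tau> - (\<Sum>j\<le>k. c j * (\<phi> * u) ^ j) = (E (Suc (Suc k)) \<xi> / fact (Suc k)) * (\<phi> * u) ^ Suc k"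
        using tay E1 \<tau>T by (simp add: f_def c_def \<tau>_def lessThan_Suc_atMost)
      also have "\<bar>\<dots>\<bar> \<le> Bk * \<bar>\<phi> * u\<bar> ^ Suc k"
      proof -
        have f1: "(1::real) \<le> fact (Suc k)" by (rule fact_ge_1)
        have "\<bar>E (Suc (Suc k)) \<xi> / fact (Suc k)\<bar> = \<bar>E (Suc (Suc k)) \<xi>\<bar> / fact (Suc k)" by simp
        also have "\<dots> \<le> \<bar>E (Suc (Suc k)) \<xi>\<bar> / 1"
          by (rule divide_left_mono) (use f1 in auto)
        finally have "\<bar>E (Suc (Suc k)) \<xi> / fact (Suc k)\<bar> \<le> \<bar>E (Suc (Suc k)) \<xi>\<bar>" by simp
        also have "\<dots> \<le> Bk" using Eb \<xi>in by auto
        finally have hh: "\<bar>E (Suc (Suc k)) \<xi> / fact (Suc k)\<bar> \<le> Bk" .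
        show ?thesis unfolding abs_mult[of _ "(\<phi> * u) ^ Suc k"] power_abs
          by (rule mult_right_mono[OF hh]) simp
      qed
      finally show ?thesis by (simp add: \<tau>_def)
    qed
    have fc: "continuous_on {0..T} f"
    proof -
      have "continuous_on {0..T} x" using xd0 by (intro DERIV_continuous_on[of _ _ "\<lambda>s. \<theta> s * x s"]) auto
      then show ?thesis unfolding f_def using thc by (intro continuous_intros)
    qed
    have fb: "\<And>s. s \<in> {0..T} \<Longrightarrow> \<bar>f s\<bar> \<le> L * X"
      using thb xb by (auto simp: f_def abs_mult intro!: mult_mono)
    have fm: "(\<lambda>u. indicator {A..B} u * f (t + \<phi> * u)) \<in> borel_measurable borel"
    proof -
      define g where "g = (\<lambda>s. indicator {0..T} s *\<^sub>R f s)"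
      have gm: "g \<in> borel_measurable borel" unfolding g_def
        by (rule borel_measurable_continuous_on_indicator[OF _ fc]) simp
      have "(\<lambda>u. indicator {A..B} u * f (t + \<phi> * u)) = (\<lambda>u. indicator {A..B} u * g (t + \<phi> * u))"
        using W by (auto simp: g_def fun_eq_iff indicator_def)
      moreover have "(\<lambda>u. g (t + \<phi> * u)) \<in> borel_measurable borel"
        using gm by measurable
      ultimately show ?thesis by simp
    qed
    have conv: "integral {0..T} (\<lambda>\<tau>. G ((\<tau> - t) / \<phi>) * f \<tau>) = \<phi> * (LINT u|lborel. G u * f (t + \<phi> * u))"
      using conv_integral(2)[OF Gm K supp fc fb phi(1) W] by blast
    have "\<bar>(LINT u|lborel. G u * f (t + \<phi> * u)) - c 0\<bar> \<le> K * Bk * (\<phi> * max (- A) B) ^ (Suc k) * (B - A)"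
      by (rule bias_abstract[OF Gm K AB supp int1 mom phi(1) Bk fm rem])
    moreover have "c 0 = \<theta> t * x t" using E1 tin by (simp add: c_def)
    moreover have "(1 / \<phi>) * integral {0..T} (\<lambda>\<tau>. G ((\<tau> - t) / \<phi>) * \<theta> \<tau> * det_sol x0 \<theta> \<tau>)
        = (LINT u|lborel. G u * f (t + \<phi> * u))"
      using conv phi by (simp add: f_def x_def mult.assoc)
    ultimately show "\<bar>(1 / \<phi>) * integral {0..T} (\<lambda>\<tau>. G ((\<tau> - t) / \<phi>) * \<theta> \<tau> * det_sol x0 \<theta> \<tau>)
                    - \<theta> t * det_sol x0 \<theta> t\<bar> \<le> Cb * \<phi> ^ Suc k"
      by (simp add: Cb_def x_def power_mult_distrib algebra_simps)
  qed
qed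

lemma nn_powr_half:
  fixes \<alpha> ll :: real
  assumes a: "\<alpha> > -1" and l: "ll \<ge> 0"
  shows "(\<integral>\<^sup>+s. ennreal (indicator {0..ll} s * s powr \<alpha>) \<partial>lborel) = ennreal (ll powr (\<alpha> + 1) / (\<alpha> + 1))"
proof -
  have "((\<lambda>s. indicator {0..ll} s * s powr \<alpha>) has_integral (ll powr (\<alpha> + 1) / (\<alpha> + 1))) UNIV"
  proof -
    have "((\<lambda>s. s powr \<alpha>) has_integral (ll powr (\<alpha> + 1) / (\<alpha> + 1))) {0..ll}"
      by (rule has_integral_powr_from_0[OF a l])
    then have "((\<lambda>s. if s \<in> {0..ll} then s powr \<alpha> else 0) has_integral (ll powr (\<alpha> + 1) / (\<alpha> + 1))) UNIV"
      by (subst has_integral_restrict_UNIV)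
    moreover have "(\<lambda>s. indicator {0..ll} s * s powr \<alpha>) = (\<lambda>s. if s \<in> {0..ll} then s powr \<alpha> else 0)"
      by (auto simp: fun_eq_iff indicator_def)
    ultimately show ?thesis by simp
  qed
  then have "integral\<^sup>N lborel (\<lambda>s. indicator {0..ll} s * s powr \<alpha>) = ennreal (ll powr (\<alpha> + 1) / (\<alpha> + 1))"
    by (intro nn_integral_has_integral_lborel) (auto simp: indicator_def)
  then show ?thesis by simp
qed

lemma nn_inner_bound:
  fixes \<alpha> ll u :: real
  assumes a: "\<alpha> > -1" and l: "ll \<ge> 0"
  shows "(\<integral>\<^sup>+v. ennreal (indicator {u - ll..u + ll} v * \<bar>u - v\<bar> powr \<alpha>) \<partial>lborel)
          \<le> ennreal (2 * (ll powr (\<alpha> + 1) / (\<alpha> + 1)))"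
proof -
  define F where "F = (\<lambda>s::real. indicator {0..ll} s * s powr \<alpha>)"
  have Fm: "F \<in> borel_measurable borel" unfolding F_def by measurable
  have F0: "F s \<ge> 0" for s by (auto simp: F_def indicator_def)
  have le: "ennreal (indicator {u - ll..u + ll} v * \<bar>u - v\<bar> powr \<alpha>) \<le> ennreal (F (v - u)) + ennreal (F (u - v))" for v
  proof (cases "v \<ge> u")
    case True
    then have "indicator {u - ll..u + ll} v * \<bar>u - v\<bar> powr \<alpha> \<le> F (v - u)"
      by (auto simp: F_def indicator_def abs_minus_commute)
    then show ?thesis using F0[of "u - v"] by (meson add_increasing2 ennreal_leI zero_le)
  next
    case False
    then have "indicator {u - ll..u + ll} v * \<bar>u - v\<bar> powr \<alpha> \<le> F (u - v)"
      by (auto simp: F_def indicator_def)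
    then show ?thesis using F0[of "v - u"] by (meson add_increasing ennreal_leI zero_le)
  qed
  have "(\<integral>\<^sup>+v. ennreal (indicator {u - ll..u + ll} v * \<bar>u - v\<bar> powr \<alpha>) \<partial>lborel)
      \<le> (\<integral>\<^sup>+v. ennreal (F (v - u)) + ennreal (F (u - v)) \<partial>lborel)"
    by (intro nn_integral_mono le)
  also have "\<dots> = (\<integral>\<^sup>+v. ennreal (F (v - u)) \<partial>lborel) + (\<integral>\<^sup>+v. ennreal (F (u - v)) \<partial>lborel)"
    by (rule nn_integral_add) (unfold F_def, measurable)+
  also have "(\<integral>\<^sup>+v. ennreal (F (v - u)) \<partial>lborel) = (\<integral>\<^sup>+s. ennreal (F s) \<partial>lborel)"
    using nn_integral_real_affine[of "\<lambda>v. ennreal (F (v - u))" 1 u] Fm by simp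
  also have "(\<integral>\<^sup>+v. ennreal (F (u - v)) \<partial>lborel) = (\<integral>\<^sup>+s. ennreal (F s) \<partial>lborel)"
    using nn_integral_real_affine[of "\<lambda>v. ennreal (F (u - v))" "-1" u] Fm by simp
  also have "(\<integral>\<^sup>+s. ennreal (F s) \<partial>lborel) = ennreal (ll powr (\<alpha> + 1) / (\<alpha> + 1))"
    unfolding F_def by (rule nn_powr_half[OF a l])
  finally show ?thesis using a l by (simp add: ennreal_plus[symmetric] del: ennreal_plus)
qed

lemma nn_sing_bound:
  fixes \<alpha> ll c :: real
  assumes a: "\<alpha> > -1" and l: "ll \<ge> 0"
  shows "(\<integral>\<^sup>+p. ennreal (indicator {c..c + ll} (fst p) * indicator {c..c + ll} (snd p) * \<bar>fst p - snd p\<bar> powr \<alpha>)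
             \<partial>(lborel \<Otimes>\<^sub>M lborel)) \<le> ennreal (2 * ll powr (\<alpha> + 2) / (\<alpha> + 1))"
proof -
  define W where "W = {c..c + ll}"
  define C where "C = 2 * (ll powr (\<alpha> + 1) / (\<alpha> + 1))"
  have C0: "C \<ge> 0" using a l by (auto simp: C_def)
  have m: "(\<lambda>p::real\<times>real. ennreal (indicator W (fst p) * indicator W (snd p) * \<bar>fst p - snd p\<bar> powr \<alpha>))
      \<in> borel_measurable (lborel \<Otimes>\<^sub>M lborel)"
    unfolding W_def by measurable
  have "(\<integral>\<^sup>+p. ennreal (indicator W (fst p) * indicator W (snd p) * \<bar>fst p - snd p\<bar> powr \<alpha>) \<partial>(lborel \<Otimes>\<^sub>M lborel))
      = (\<integral>\<^sup>+u. \<integral>\<^sup>+v. ennreal (indicator W u * indicator W v * \<bar>u - v\<bar> powr \<alpha>) \<partial>lborel \<partial>lborel)"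
    using lborel.nn_integral_fst[OF m] by simp
  also have "\<dots> \<le> (\<integral>\<^sup>+u. ennreal (indicator W u * C) \<partial>lborel)"
  proof (intro nn_integral_mono)
    fix u
    show "(\<integral>\<^sup>+v. ennreal (indicator W u * indicator W v * \<bar>u - v\<bar> powr \<alpha>) \<partial>lborel) \<le> ennreal (indicator W u * C)"
    proof (cases "u \<in> W")
      case True
      have "(\<integral>\<^sup>+v. ennreal (indicator W u * indicator W v * \<bar>u - v\<bar> powr \<alpha>) \<partial>lborel)
          \<le> (\<integral>\<^sup>+v. ennreal (indicator {u - ll..u + ll} v * \<bar>u - v\<bar> powr \<alpha>) \<partial>lborel)"
        using True by (intro nn_integral_mono ennreal_leI) (auto simp: W_def indicator_def)
      also have "\<dots> \<le> ennreal C" unfolding C_def by (rule nn_inner_bound[OF a l])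
      finally show ?thesis using True by simp
    next
      case False
      then show ?thesis by simp
    qed
  qed
  also have "\<dots> = ennreal C * (\<integral>\<^sup>+u. ennreal (indicator W u) \<partial>lborel)"
    using C0 by (subst nn_integral_cmult[symmetric]) (auto simp: W_def ennreal_mult' mult.commute)
  also have "\<dots> = ennreal C * ennreal ll"
    using l by (simp add: W_def ennreal_indicator)
  also have "\<dots> = ennreal (2 * ll powr (\<alpha> + 2) / (\<alpha> + 1))"
  proof -
    have "C * ll = 2 * ll powr (\<alpha> + 2) / (\<alpha> + 1)"
    proof (cases "ll = 0")
      case False
      then have "ll powr (\<alpha> + 2) = ll powr (\<alpha> + 1) * ll" using l
        using powr_add[of ll "\<alpha> + 1" 1] by (simp add: add.assoc)
      then show ?thesis by (simp add: C_def)
    qed (simp add: C_def)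
    then show ?thesis using C0 l by (simp add: ennreal_mult[symmetric])
  qed
  finally show ?thesis unfolding W_def .
qed

lemma hu1:
  assumes "hermite_setting M H Z WI"
  shows "prob_space M"
  using assms unfolding hermite_setting_def by (elim conjE) assumption

lemma hu2:
  assumes "hermite_setting M H Z WI"
  shows "\<forall>t\<ge>0. Z t \<in> borel_measurable M \<and> integrable M (\<lambda>\<omega>. (Z t \<omega>)\<^sup>2) \<and> (\<integral>\<omega>. Z t \<omega> \<partial>M) = 0"
  using assms unfolding hermite_setting_def by (elim conjE) assumption

lemma hu3:
  assumes "hermite_setting M H Z WI"
  shows "\<forall>s\<ge>0. \<forall>t\<ge>0. (\<integral>\<omega>. Z s \<omega> * Z t \<omega> \<partial>M) =
             (t powr (2*H) + s powr (2*H) - \<bar>t - s\<bar> powr (2*H)) / 2"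
  using assms unfolding hermite_setting_def by (elim conjE) assumption

lemma hu4:
  assumes "hermite_setting M H Z WI"
  shows "\<forall>\<omega>\<in>space M. continuous_on {0..} (\<lambda>t. Z t \<omega>)"
  using assms unfolding hermite_setting_def by (elim conjE) assumption

lemma hu5:
  assumes "hermite_setting M H Z WI"
  shows "\<forall>f. wiener_admissible H f \<longrightarrow>
         WI f \<in> borel_measurable M \<and> integrable M (\<lambda>\<omega>. (WI f \<omega>)\<^sup>2) \<and> (\<integral>\<omega>. WI f \<omega> \<partial>M) = 0"
  using assms unfolding hermite_setting_def by (elim conjE) assumption

lemma hu6:
  assumes "hermite_setting M H Z WI"
  shows "\<forall>f g. wiener_admissible H f \<longrightarrow> wiener_admissible H g \<longrightarrow>
         (\<integral>\<omega>. WI f \<omega> * WI g \<omega> \<partial>M) =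
           H * (2*H - 1) * (\<integral>p. f (fst p) * g (snd p) * \<bar>fst p - snd p\<bar> powr (2*H - 2)
                              \<partial>(lborel \<Otimes>\<^sub>M lborel))"
  using assms unfolding hermite_setting_def by (elim conjE) assumption

lemma hu7:
  assumes "hermite_setting M H Z WI"
  shows "\<forall>f g a b. wiener_admissible H f \<longrightarrow> wiener_admissible H g \<longrightarrow>
         (AE \<omega> in M. WI (\<lambda>u. a * f u + b * g u) \<omega> = a * WI f \<omega> + b * WI g \<omega>)"
  using assms unfolding hermite_setting_def by (elim conjE) assumption

lemma hu8:
  assumes "hermite_setting M H Z WI"
  shows "\<forall>t\<ge>0. AE \<omega> in M. WI (indicator {0..t}) \<omega> = Z t \<omega>"
  using assms unfolding hermite_setting_def by (elim conjE) assumption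

lemmas hermite_unfold = hu1 hu2 hu3 hu4 hu5 hu6 hu7 hu8

lemma noise_bound:
  assumes H: "1/2 < H" "H < 1" and hs: "hermite_setting M H Z WI" and G: "kernel_ok k G"
  shows "\<exists>Cn. \<forall>\<phi> t. \<phi> > 0 \<longrightarrow>
     wiener_admissible H (\<lambda>\<tau>. G ((\<tau> - t) / \<phi>) * indicator {0..T} \<tau>) \<and>
     (\<integral>\<omega>. (WI (\<lambda>\<tau>. G ((\<tau> - t) / \<phi>) * indicator {0..T} \<tau>) \<omega>)\<^sup>2 \<partial>M) \<le> Cn * \<phi> powr (2 * H)"
proof -
  obtain K A B where Gm: "G \<in> borel_measurable borel" and K: "\<And>u. \<bar>G u\<bar> \<le> K"
    and AB: "A < 0" "0 < B" and supp: "\<And>u. u \<notin> {A..B} \<Longrightarrow> G u = 0"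
    and "(LINT u|lborel. G u) = 1" and "\<forall>j\<in>{1..k}. (LINT u|lborel. u ^ j * G u) = 0"
    using kernel_unfold[OF G] by blast
  have K0: "K \<ge> 0" using K[of 0] by linarith
  define Cn where "Cn = 2 * H * K\<^sup>2 * (B - A) powr (2 * H)"
  show ?thesis
  proof (rule exI[of _ Cn], intro allI impI)
    fix \<phi> t :: real assume phi: "\<phi> > 0"
    define g where "g = (\<lambda>\<tau>. G ((\<tau> - t) / \<phi>) * indicator {0..T} \<tau>)"
    define ll where "ll = (B - A) * \<phi>"
    define c where "c = t + A * \<phi>"
    define \<alpha> where "\<alpha> = 2 * H - 2"
    have a: "\<alpha> > -1" using H by (simp add: \<alpha>_def)
    have ll: "ll \<ge> 0" using AB phi by (simp add: ll_def)
    have gm: "g \<in> borel_measurable borel" unfolding g_def using Gm by measurable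
    have gb: "\<bar>g u\<bar> \<le> K * indicator {c..c + ll} u" for u
    proof (cases "u \<in> {c..c + ll}")
      case True
      then show ?thesis using K[of "(u - t) / \<phi>"] K0 by (auto simp: g_def abs_mult indicator_def)
    next
      case False
      then have "(u - t) / \<phi> \<notin> {A..B}" using phi
        by (auto simp: c_def ll_def field_simps)
      then show ?thesis using supp K0 by (simp add: g_def)
    qed
    define r where "r = K\<^sup>2 * (2 * ll powr (\<alpha> + 2) / (\<alpha> + 1))"
    have r0: "r \<ge> 0" using a ll by (simp add: r_def)
    have pb: "\<bar>g (fst p) * g (snd p)\<bar> * \<bar>fst p - snd p\<bar> powr \<alpha>
        \<le> K\<^sup>2 * (indicator {c..c + ll} (fst p) * indicator {c..c + ll} (snd p) * \<bar>fst p - snd p\<bar> powr \<alpha>)" for p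
    proof -
      have "\<bar>g (fst p) * g (snd p)\<bar> \<le> (K * indicator {c..c + ll} (fst p)) * (K * indicator {c..c + ll} (snd p))"
        unfolding abs_mult by (intro mult_mono gb) (auto simp: K0)
      then have "\<bar>g (fst p) * g (snd p)\<bar> * \<bar>fst p - snd p\<bar> powr \<alpha>
          \<le> (K * indicator {c..c + ll} (fst p)) * (K * indicator {c..c + ll} (snd p)) * \<bar>fst p - snd p\<bar> powr \<alpha>"
        by (rule mult_right_mono) simp
      then show ?thesis by (simp add: power2_eq_square algebra_simps)
    qed
    have nnb: "(\<integral>\<^sup>+p. ennreal (\<bar>g (fst p) * g (snd p)\<bar> * \<bar>fst p - snd p\<bar> powr \<alpha>) \<partial>(lborel \<Otimes>\<^sub>M lborel)) \<le> ennreal r"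
    proof -
      have "(\<integral>\<^sup>+p. ennreal (\<bar>g (fst p) * g (snd p)\<bar> * \<bar>fst p - snd p\<bar> powr \<alpha>) \<partial>(lborel \<Otimes>\<^sub>M lborel))
          \<le> (\<integral>\<^sup>+p. ennreal (K\<^sup>2) * ennreal (indicator {c..c + ll} (fst p) * indicator {c..c + ll} (snd p) * \<bar>fst p - snd p\<bar> powr \<alpha>) \<partial>(lborel \<Otimes>\<^sub>M lborel))"
        by (intro nn_integral_mono) (simp add: ennreal_mult'[symmetric] ennreal_leI pb)
      also have "\<dots> = ennreal (K\<^sup>2) * (\<integral>\<^sup>+p. ennreal (indicator {c..c + ll} (fst p) * indicator {c..c + ll} (snd p) * \<bar>fst p - snd p\<bar> powr \<alpha>) \<partial>(lborel \<Otimes>\<^sub>M lborel))"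
        by (rule nn_integral_cmult) measurable
      also have "\<dots> \<le> ennreal (K\<^sup>2) * ennreal (2 * ll powr (\<alpha> + 2) / (\<alpha> + 1))"
        by (intro mult_left_mono nn_sing_bound a ll) simp
      also have "\<dots> = ennreal r" unfolding r_def by (subst ennreal_mult) (use a ll in auto)
      finally show ?thesis .
    qed
    have adm: "wiener_admissible H g"
      unfolding wiener_admissible_def using gm nnb by (auto simp: \<alpha>_def top_unique[symmetric] intro: le_less_trans)
    have "(\<integral>\<omega>. (WI g \<omega>)\<^sup>2 \<partial>M) = (\<integral>\<omega>. WI g \<omega> * WI g \<omega> \<partial>M)" by (simp add: power2_eq_square)
    also have "\<dots> = H * (2*H - 1) * (\<integral>p. g (fst p) * g (snd p) * \<bar>fst p - snd p\<bar> powr \<alpha> \<partial>(lborel \<Otimes>\<^sub>M lborel))"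
      using hermite_unfold(6)[OF hs, rule_format, OF adm adm] by (simp add: \<alpha>_def)
    also have "\<dots> \<le> H * (2*H - 1) * r"
    proof (intro mult_left_mono)
      show "(\<integral>p. g (fst p) * g (snd p) * \<bar>fst p - snd p\<bar> powr \<alpha> \<partial>(lborel \<Otimes>\<^sub>M lborel)) \<le> r"
      proof (rule integral_real_bounded[OF r0])
        show "(\<integral>\<^sup>+p. ennreal (g (fst p) * g (snd p) * \<bar>fst p - snd p\<bar> powr \<alpha>) \<partial>(lborel \<Otimes>\<^sub>M lborel)) \<le> ennreal r"
          by (rule order_trans[OF nn_integral_mono nnb]) (auto intro!: ennreal_leI mult_right_mono)
      qed
    qed (use H in auto)
    also have "\<dots> = Cn * \<phi> powr (2 * H)"
    proof -
      have "ll powr (\<alpha> + 2) = (B - A) powr (2 * H) * \<phi> powr (2 * H)"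
        using AB phi by (simp add: ll_def \<alpha>_def powr_mult)
      then show ?thesis using H by (simp add: r_def Cn_def \<alpha>_def field_simps)
    qed
    finally show "wiener_admissible H (\<lambda>\<tau>. G ((\<tau> - t) / \<phi>) * indicator {0..T} \<tau>) \<and>
     (\<integral>\<omega>. (WI (\<lambda>\<tau>. G ((\<tau> - t) / \<phi>) * indicator {0..T} \<tau>) \<omega>)\<^sup>2 \<partial>M) \<le> Cn * \<phi> powr (2 * H)"
      using adm by (simp add: g_def)
  qed
qed

lemma floor_div_bounds:
  fixes T N y :: real assumes T: "T > 0" and N: "N > 0"
  shows "T * (y - 1) / N \<le> T * real_of_int \<lfloor>y\<rfloor> / N" "T * real_of_int \<lfloor>y\<rfloor> / N \<le> T * y / N"
proof -
  have f1: "y - 1 \<le> real_of_int \<lfloor>y\<rfloor>" "real_of_int \<lfloor>y\<rfloor> \<le> y" by linarith+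
  show "T * (y - 1) / N \<le> T * real_of_int \<lfloor>y\<rfloor> / N"
    using f1 T N by (intro divide_right_mono mult_left_mono) auto
  show "T * real_of_int \<lfloor>y\<rfloor> / N \<le> T * y / N"
    using f1 T N by (intro divide_right_mono mult_left_mono) auto
qed

lemma grid_approx:
  fixes T s :: real assumes T: "T > 0" and s: "s \<in> {0..T}"
  shows "s - T / real (Suc n) \<le> T * real_of_int \<lfloor>s * real (Suc n) / T\<rfloor> / real (Suc n)"
    and "T * real_of_int \<lfloor>s * real (Suc n) / T\<rfloor> / real (Suc n) \<le> s"
    and "0 \<le> T * real_of_int \<lfloor>s * real (Suc n) / T\<rfloor> / real (Suc n)"
proof -
  define y where "y = s * real (Suc n) / T"
  have y0: "y \<ge> 0" using T s by (simp add: y_def)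
  have N: "real (Suc n) > 0" by simp
  have e2: "T * y / real (Suc n) = s" using T by (simp add: y_def)
  have "T * (y - 1) / real (Suc n) = T * y / real (Suc n) - T / real (Suc n)"
    by (simp add: diff_divide_distrib right_diff_distrib)
  then have e1: "T * (y - 1) / real (Suc n) = s - T / real (Suc n)" using e2 by simp
  show "s - T / real (Suc n) \<le> T * real_of_int \<lfloor>s * real (Suc n) / T\<rfloor> / real (Suc n)"
  proof -
    have "s - T / real (Suc n) \<le> T * real_of_int \<lfloor>y\<rfloor> / real (Suc n)"
      using floor_div_bounds(1)[OF T N, of y] e1 by linarith
    then show ?thesis by (simp add: y_def)
  qed
  show "T * real_of_int \<lfloor>s * real (Suc n) / T\<rfloor> / real (Suc n) \<le> s"
  proof -
    have "T * real_of_int \<lfloor>y\<rfloor> / real (Suc n) \<le> s"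
      using floor_div_bounds(2)[OF T N, of y] e2 by linarith
    then show ?thesis by (simp add: y_def)
  qed
  have "real_of_int \<lfloor>y\<rfloor> \<ge> 0" using y0 by simp
  then show "0 \<le> T * real_of_int \<lfloor>s * real (Suc n) / T\<rfloor> / real (Suc n)"
    unfolding y_def[symmetric] using T by simp
qed

lemma cara:
  fixes F :: "real \<Rightarrow> 'a \<Rightarrow> real"
  assumes T: "T > 0" and cont: "\<And>\<omega>. \<omega> \<in> space M \<Longrightarrow> continuous_on {0..T} (\<lambda>s. F s \<omega>)"
    and meas: "\<And>s. s \<in> {0..T} \<Longrightarrow> F s \<in> borel_measurable M"
  shows "(\<lambda>p. indicator {0..T} (snd p) * F (snd p) (fst p)) \<in> borel_measurable (M \<Otimes>\<^sub>M lborel)"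
proof -
  define cl where "cl = (\<lambda>r::real. max 0 (min T r))"
  have cl: "cl r \<in> {0..T}" for r using T by (auto simp: cl_def)
  define q where "q = (\<lambda>(n::nat) (i::int). cl (T * real_of_int i / real (Suc n)))"
  define g where "g = (\<lambda>(n::nat) (p::'a \<times> real). \<lfloor>snd p * real (Suc n) / T\<rfloor>)"
  define u where "u = (\<lambda>n p. indicator {0..T} (snd p) * F (q n (g n p)) (fst p))"
  have um: "u n \<in> borel_measurable (M \<Otimes>\<^sub>M lborel)" for n
  proof -
    have fm: "(\<lambda>p. indicator {0..T} (snd p) * F (q n i) (fst p)) \<in> borel_measurable (M \<Otimes>\<^sub>M lborel)" for i
    proof -
      have "F (q n i) \<in> borel_measurable M" using meas cl by (simp add: q_def)
      then have "(\<lambda>p. F (q n i) (fst p)) \<in> borel_measurable (M \<Otimes>\<^sub>M lborel)"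
        by (rule measurable_compose[OF measurable_fst])
      then show ?thesis by measurable
    qed
    have gm: "g n \<in> measurable (M \<Otimes>\<^sub>M lborel) (count_space UNIV)"
      unfolding g_def by measurable
    show ?thesis unfolding u_def
      by (rule measurable_compose_countable'[where I=UNIV, OF fm gm]) auto
  qed
  show ?thesis
  proof (rule borel_measurable_LIMSEQ_real[OF _ um])
    fix p :: "'a \<times> real" assume p: "p \<in> space (M \<Otimes>\<^sub>M lborel)"
    obtain \<omega> s where ps: "p = (\<omega>, s)" by (cases p)
    have \<omega>: "\<omega> \<in> space M" using p ps by (simp add: space_pair_measure)
    show "(\<lambda>n. u n p) \<longlonglongrightarrow> indicator {0..T} (snd p) * F (snd p) (fst p)"
    proof (cases "s \<in> {0..T}")
      case False
      then show ?thesis by (simp add: u_def ps)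
    next
      case True
      define r where "r = (\<lambda>n. T * real_of_int \<lfloor>s * real (Suc n) / T\<rfloor> / real (Suc n))"
      have rin: "r n \<in> {0..T}" for n using grid_approx[OF T True, of n] True by (auto simp: r_def)
      have qr: "q n (g n (\<omega>, s)) = r n" for n using rin[of n] by (simp add: q_def g_def ps cl_def r_def)
      have "r \<longlonglongrightarrow> s"
      proof (rule tendsto_sandwich[of "\<lambda>n. s - T / real (Suc n)" _ _ "\<lambda>n. s"])
        show "\<forall>\<^sub>F n in sequentially. s - T / real (Suc n) \<le> r n"
          using grid_approx(1)[OF T True] by (simp add: r_def)
        show "\<forall>\<^sub>F n in sequentially. r n \<le> s"
          using grid_approx(2)[OF T True] by (simp add: r_def)
        have "(\<lambda>n. T / real (Suc n)) \<longlonglongrightarrow> 0"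
          using tendsto_mult_right_zero[OF LIMSEQ_inverse_real_of_nat, of T]
          by (simp add: divide_inverse)
        then show "(\<lambda>n. s - T / real (Suc n)) \<longlonglongrightarrow> s"
          using tendsto_diff[OF tendsto_const, of _ 0 sequentially s] by simp
      qed simp
      then have "(\<lambda>n. F (r n) \<omega>) \<longlonglongrightarrow> F s \<omega>"
        using continuous_on_tendsto_compose[OF cont[OF \<omega>], of r s sequentially] True rin by auto
      then show ?thesis using True by (simp add: u_def ps qr)
    qed
  qed
qed

lemma sde_formula:
  fixes \<theta> Xw Zw :: "real \<Rightarrow> real"
  assumes thc: "continuous_on {0..T} \<theta>" and Xc: "continuous_on {0..T} Xw"
    and Zc: "continuous_on {0..T} Zw"
    and eq: "\<forall>t\<in>{0..T}. Xw t = x0 + integral {0..t} (\<lambda>s. \<theta> s * Xw s) + \<epsilon> * Zw t"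
    and \<tau>: "\<tau> \<in> {0..T}"
  shows "Xw \<tau> = det_sol x0 \<theta> \<tau> + \<epsilon> * Zw \<tau>
           + \<epsilon> * exp (integral {0..\<tau>} \<theta>) * integral {0..\<tau>} (\<lambda>s. exp (- integral {0..s} \<theta>) * \<theta> s * Zw s)"
proof -
  define \<Theta> where "\<Theta> = (\<lambda>s. integral {0..s} \<theta>)"
  define I where "I = (\<lambda>s. integral {0..s} (\<lambda>s. \<theta> s * Xw s))"
  define J where "J = (\<lambda>s. exp (- \<Theta> s) * (I s + x0))"
  define j where "j = (\<lambda>s. exp (- \<Theta> s) * \<theta> s * (\<epsilon> * Zw s))"
  have \<Theta>d: "(\<Theta> has_real_derivative \<theta> s) (at s within {0..T})" if "s \<in> {0..T}" for s
    using integral_has_vector_derivative[OF thc that]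
    by (simp add: \<Theta>_def has_real_derivative_iff_has_vector_derivative)
  have thX: "continuous_on {0..T} (\<lambda>s. \<theta> s * Xw s)" using thc Xc by (intro continuous_intros)
  have Id: "(I has_real_derivative \<theta> s * Xw s) (at s within {0..T})" if "s \<in> {0..T}" for s
    using integral_has_vector_derivative[OF thX that]
    by (simp add: I_def has_real_derivative_iff_has_vector_derivative)
  have Jd: "(J has_real_derivative j s) (at s within {0..T})" if s: "s \<in> {0..T}" for s
  proof -
    have "(J has_real_derivative (exp (- \<Theta> s) * (- \<theta> s)) * (I s + x0) + exp (- \<Theta> s) * (\<theta> s * Xw s))
            (at s within {0..T})"
      unfolding J_def by (auto intro!: derivative_eq_intros \<Theta>d[OF s] Id[OF s])
    moreover have "(exp (- \<Theta> s) * (- \<theta> s)) * (I s + x0) + exp (- \<Theta> s) * (\<theta> s * Xw s) = j s"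
      using eq s by (simp add: j_def I_def algebra_simps)
    ultimately show ?thesis by simp
  qed
  have \<tau>0: "0 \<le> \<tau>" using \<tau> by simp
  have "(j has_integral (J \<tau> - J 0)) {0..\<tau>}"
  proof (rule fundamental_theorem_of_calculus[OF \<tau>0])
    fix s assume s: "s \<in> {0..\<tau>}"
    then have sT: "s \<in> {0..T}" using \<tau> by auto
    have "(J has_real_derivative j s) (at s within {0..\<tau>})"
      by (rule DERIV_subset[OF Jd[OF sT]]) (use \<tau> in auto)
    then show "(J has_vector_derivative j s) (at s within {0..\<tau>})"
      by (simp add: has_real_derivative_iff_has_vector_derivative)
  qed
  then have jint: "integral {0..\<tau>} j = J \<tau> - J 0" by (rule integral_unique)
  have J0: "J 0 = x0" by (simp add: J_def \<Theta>_def I_def)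
  have "integral {0..\<tau>} j = \<epsilon> * integral {0..\<tau>} (\<lambda>s. exp (- \<Theta> s) * \<theta> s * Zw s)"
    unfolding j_def using integral_mult_right[of "{0..\<tau>}" \<epsilon> "\<lambda>s. exp (- \<Theta> s) * \<theta> s * Zw s"]
    by (simp add: algebra_simps)
  then have "J \<tau> = x0 + \<epsilon> * integral {0..\<tau>} (\<lambda>s. exp (- \<Theta> s) * \<theta> s * Zw s)"
    using jint J0 by simp
  then have "I \<tau> + x0 = exp (\<Theta> \<tau>) * (x0 + \<epsilon> * integral {0..\<tau>} (\<lambda>s. exp (- \<Theta> s) * \<theta> s * Zw s))"
    unfolding J_def by (simp add: exp_minus field_simps)
  moreover have "Xw \<tau> = x0 + I \<tau> + \<epsilon> * Zw \<tau>" using eq \<tau> by (simp add: I_def)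
  ultimately show ?thesis by (simp add: det_sol_def \<Theta>_def algebra_simps)
qed

lemma set_int_G:
  fixes G g :: "real \<Rightarrow> real"
  assumes Gm: "G \<in> borel_measurable borel" and K: "\<And>u. \<bar>G u\<bar> \<le> K"
    and gc: "continuous_on {0..T} g"
  shows "set_integrable lborel {0..T} (\<lambda>\<tau>. G ((\<tau> - t) / \<phi>) * g \<tau>)"
proof -
  have "bounded (g ` {0..T})" by (rule compact_imp_bounded[OF compact_continuous_image[OF gc compact_Icc]])
  then obtain Cg where "\<forall>y\<in>g ` {0..T}. norm y \<le> Cg" by (auto simp: bounded_iff)
  then have gb: "\<And>s. s \<in> {0..T} \<Longrightarrow> \<bar>g s\<bar> \<le> Cg" by auto
  define gi where "gi = (\<lambda>s. indicator {0..T} s * g s)"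
  have gim: "gi \<in> borel_measurable borel"
    unfolding gi_def using borel_measurable_continuous_on_indicator[OF _ gc] by simp
  define hi where "hi = (\<lambda>\<tau>. G ((\<tau> - t) / \<phi>) * gi \<tau>)"
  have Gc: "(\<lambda>\<tau>. G ((\<tau> - t) / \<phi>)) \<in> borel_measurable borel"
    using Gm by measurable
  have him: "hi \<in> borel_measurable borel" unfolding hi_def using Gc gim by measurable
  have "integrable lborel hi"
  proof (rule integrable_bounded_support[where A=0 and B=T and C="K * Cg"])
    fix u assume u: "u \<in> {0..T}"
    have "\<bar>G ((u - t) / \<phi>)\<bar> \<le> K" by (rule K)
    moreover have "\<bar>gi u\<bar> \<le> Cg" using gb[OF u] u by (simp add: gi_def)
    ultimately show "\<bar>hi u\<bar> \<le> K * Cg" unfolding hi_def abs_mult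
      by (meson abs_ge_zero mult_mono order_trans)
  qed (use him in \<open>auto simp: hi_def gi_def\<close>)
  moreover have hi_eq: "hi = (\<lambda>\<tau>. indicator {0..T} \<tau> *\<^sub>R (G ((\<tau> - t) / \<phi>) * g \<tau>))"
    by (auto simp: hi_def gi_def fun_eq_iff)
  ultimately show ?thesis unfolding set_integrable_def by simp
qed

lemma Z_joint:
  assumes hs: "hermite_setting M H Z WI" and T: "T > 0"
  shows "(\<lambda>p. indicator {0..T} (snd p) * Z (snd p) (fst p)) \<in> borel_measurable (M \<Otimes>\<^sub>M lborel)"
proof (rule cara[OF T])
  fix \<omega> assume "\<omega> \<in> space M"
  then have "continuous_on {0..} (\<lambda>t. Z t \<omega>)" using hu4[OF hs] by blast
  then show "continuous_on {0..T} (\<lambda>s. Z s \<omega>)" by (rule continuous_on_subset) auto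
next
  fix s :: real assume "s \<in> {0..T}"
  then show "Z s \<in> borel_measurable M" using hu2[OF hs] by auto
qed

lemma V_meas:
  assumes hs: "hermite_setting M H Z WI" and T: "T > 0"
    and qc: "continuous_on {0..T} q" and \<tau>: "\<tau> \<in> {0..T}"
  shows "(\<lambda>\<omega>. integral {0..\<tau>} (\<lambda>s. q s * Z s \<omega>)) \<in> borel_measurable M"
proof -
  define f where "f = (\<lambda>\<omega> s. (indicator {0..\<tau>} s * q s) * (indicator {0..T} s * Z s \<omega>))"
  have qi: "(\<lambda>s. indicator {0..\<tau>} s * q s) \<in> borel_measurable borel"
    using borel_measurable_continuous_on_indicator[OF _ continuous_on_subset[OF qc]] \<tau> by auto
  have "case_prod f \<in> borel_measurable (M \<Otimes>\<^sub>M lborel)"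
  proof -
    have "(\<lambda>p. indicator {0..\<tau>} (snd p) * q (snd p)) \<in> borel_measurable (M \<Otimes>\<^sub>M lborel)"
      by (rule measurable_compose[OF measurable_snd]) (use qi in simp)
    moreover note Z_joint[OF hs T]
    ultimately have "(\<lambda>p. (indicator {0..\<tau>} (snd p) * q (snd p)) * (indicator {0..T} (snd p) * Z (snd p) (fst p)))
        \<in> borel_measurable (M \<Otimes>\<^sub>M lborel)" by measurable
    then show ?thesis by (simp add: f_def case_prod_beta')
  qed
  then have m: "(\<lambda>\<omega>. \<integral>s. f \<omega> s \<partial>lborel) \<in> borel_measurable M"
    by (rule lborel.borel_measurable_lebesgue_integral)
  show ?thesis
  proof (rule measurable_cong[THEN iffD1, OF _ m])
    fix \<omega> assume \<omega>: "\<omega> \<in> space M"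
    have Zc: "continuous_on {0..\<tau>} (\<lambda>s. Z s \<omega>)"
      using hu4[OF hs] \<omega> by (auto intro: continuous_on_subset)
    have "continuous_on {0..\<tau>} (\<lambda>s. q s * Z s \<omega>)"
      using continuous_on_subset[OF qc] \<tau> Zc by (auto intro!: continuous_intros)
    then have "integral {0..\<tau>} (\<lambda>s. q s * Z s \<omega>) = (LINT s:{0..\<tau>}|lborel. q s * Z s \<omega>)"
      using set_borel_integral_eq_integral(2)[OF borel_integrable_atLeastAtMost'] by metis
    also have "\<dots> = (\<integral>s. f \<omega> s \<partial>lborel)"
      unfolding set_lebesgue_integral_def f_def using \<tau>
      by (intro Bochner_Integration.integral_cong) (auto simp: indicator_def)
    finally show "(\<integral>s. f \<omega> s \<partial>lborel) = integral {0..\<tau>} (\<lambda>s. q s * Z s \<omega>)" by simp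
  qed
qed

lemma Theta_cont:
  fixes \<theta> :: "real \<Rightarrow> real"
  assumes thc: "continuous_on {0..T} \<theta>"
  shows "continuous_on {0..T} (\<lambda>s. integral {0..s} \<theta>)"
proof -
  have "((\<lambda>s. integral {0..s} \<theta>) has_real_derivative \<theta> s) (at s within {0..T})" if s: "s \<in> {0..T}" for s
    using integral_has_vector_derivative[OF thc s] by (simp add: has_real_derivative_iff_has_vector_derivative)
  then show ?thesis by (rule DERIV_continuous_on)
qed

lemma X_meas:
  assumes hs: "hermite_setting M H Z WI" and T: "T > 0"
    and thc: "continuous_on {0..T} \<theta>" and sde: "solves_sde M T x0 \<epsilon> \<theta> Z X"
  shows "\<And>\<tau>. \<tau> \<in> {0..T} \<Longrightarrow> X \<tau> \<in> borel_measurable M"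
    and "(\<lambda>p. indicator {0..T} (snd p) * X (snd p) (fst p)) \<in> borel_measurable (M \<Otimes>\<^sub>M lborel)"
proof -
  have Xc: "\<And>\<omega>. \<omega> \<in> space M \<Longrightarrow> continuous_on {0..T} (\<lambda>s. X s \<omega>)"
    and Xeq: "\<And>\<omega>. \<omega> \<in> space M \<Longrightarrow> \<forall>t\<in>{0..T}. X t \<omega> = x0 + integral {0..t} (\<lambda>s. \<theta> s * X s \<omega>) + \<epsilon> * Z t \<omega>"
    using sde unfolding solves_sde_def by auto
  define q where "q = (\<lambda>s. exp (- integral {0..s} \<theta>) * \<theta> s)"
  have qc: "continuous_on {0..T} q" unfolding q_def
    using Theta_cont[OF thc] thc by (intro continuous_intros)
  show Xm: "X \<tau> \<in> borel_measurable M" if \<tau>: "\<tau> \<in> {0..T}" for \<tau>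
  proof -
    have Vm: "(\<lambda>\<omega>. integral {0..\<tau>} (\<lambda>s. q s * Z s \<omega>)) \<in> borel_measurable M"
      by (rule V_meas[OF hs T qc \<tau>])
    have Zm: "Z \<tau> \<in> borel_measurable M" using hu2[OF hs] \<tau> by auto
    have "(\<lambda>\<omega>. det_sol x0 \<theta> \<tau> + \<epsilon> * Z \<tau> \<omega> + \<epsilon> * exp (integral {0..\<tau>} \<theta>) * integral {0..\<tau>} (\<lambda>s. q s * Z s \<omega>))
        \<in> borel_measurable M" using Vm Zm by measurable
    moreover have "det_sol x0 \<theta> \<tau> + \<epsilon> * Z \<tau> \<omega> + \<epsilon> * exp (integral {0..\<tau>} \<theta>) * integral {0..\<tau>} (\<lambda>s. q s * Z s \<omega>)
        = X \<tau> \<omega>" if \<omega>: "\<omega> \<in> space M" for \<omega>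
    proof -
      have Zc: "continuous_on {0..T} (\<lambda>s. Z s \<omega>)"
        using hu4[OF hs] \<omega> by (auto intro: continuous_on_subset)
      show ?thesis using sde_formula[OF thc Xc[OF \<omega>] Zc Xeq[OF \<omega>] \<tau>] by (simp add: q_def)
    qed
    ultimately show ?thesis by (rule measurable_cong[THEN iffD1, rotated]) auto
  qed
  show "(\<lambda>p. indicator {0..T} (snd p) * X (snd p) (fst p)) \<in> borel_measurable (M \<Otimes>\<^sub>M lborel)"
    by (rule cara[OF T Xc Xm])
qed

lemma est_meas:
  assumes hs: "hermite_setting M H Z WI" and T: "T > 0"
    and thc: "continuous_on {0..T} \<theta>" and sde: "solves_sde M T x0 \<epsilon> \<theta> Z X"
    and Gm: "G \<in> borel_measurable borel" and K: "\<And>u. \<bar>G u\<bar> \<le> K"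
  shows "(\<lambda>\<omega>. integral {0..T} (\<lambda>\<tau>. G ((\<tau> - t) / \<phi>) * \<theta> \<tau> * X \<tau> \<omega>)) \<in> borel_measurable M"
proof -
  have Xc: "\<And>\<omega>. \<omega> \<in> space M \<Longrightarrow> continuous_on {0..T} (\<lambda>s. X s \<omega>)"
    using sde unfolding solves_sde_def by auto
  define f where "f = (\<lambda>\<omega> \<tau>. G ((\<tau> - t) / \<phi>) * (indicator {0..T} \<tau> * \<theta> \<tau>) * (indicator {0..T} \<tau> * X \<tau> \<omega>))"
  have thi: "(\<lambda>s. indicator {0..T} s * \<theta> s) \<in> borel_measurable borel"
    using borel_measurable_continuous_on_indicator[OF _ thc] by simp
  have "case_prod f \<in> borel_measurable (M \<Otimes>\<^sub>M lborel)"
  proof -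
    have a1: "(\<lambda>p. G ((snd p - t) / \<phi>)) \<in> borel_measurable (M \<Otimes>\<^sub>M lborel)"
      using Gm by measurable
    have a2: "(\<lambda>p. indicator {0..T} (snd p) * \<theta> (snd p)) \<in> borel_measurable (M \<Otimes>\<^sub>M lborel)"
      by (rule measurable_compose[OF measurable_snd]) (use thi in simp)
    note a3 = X_meas(2)[OF hs T thc sde]
    have "(\<lambda>p. G ((snd p - t) / \<phi>) * (indicator {0..T} (snd p) * \<theta> (snd p)) * (indicator {0..T} (snd p) * X (snd p) (fst p)))
        \<in> borel_measurable (M \<Otimes>\<^sub>M lborel)" using a1 a2 a3 by measurable
    then show ?thesis by (simp add: f_def case_prod_beta')
  qed
  then have m: "(\<lambda>\<omega>. \<integral>s. f \<omega> s \<partial>lborel) \<in> borel_measurable M"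
    by (rule lborel.borel_measurable_lebesgue_integral)
  show ?thesis
  proof (rule measurable_cong[THEN iffD1, OF _ m])
    fix \<omega> assume \<omega>: "\<omega> \<in> space M"
    have gc: "continuous_on {0..T} (\<lambda>s. \<theta> s * X s \<omega>)" using thc Xc[OF \<omega>] by (intro continuous_intros)
    have si: "set_integrable lborel {0..T} (\<lambda>\<tau>. G ((\<tau> - t) / \<phi>) * (\<theta> \<tau> * X \<tau> \<omega>))"
      by (rule set_int_G[OF Gm K gc])
    have "integral {0..T} (\<lambda>\<tau>. G ((\<tau> - t) / \<phi>) * (\<theta> \<tau> * X \<tau> \<omega>)) = (LINT \<tau>:{0..T}|lborel. G ((\<tau> - t) / \<phi>) * (\<theta> \<tau> * X \<tau> \<omega>))"
      using set_borel_integral_eq_integral(2)[OF si] by simp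
    also have "\<dots> = (\<integral>s. f \<omega> s \<partial>lborel)"
      unfolding set_lebesgue_integral_def f_def
      by (intro Bochner_Integration.integral_cong) (auto simp: indicator_def)
    finally show "(\<integral>s. f \<omega> s \<partial>lborel) = integral {0..T} (\<lambda>\<tau>. G ((\<tau> - t) / \<phi>) * \<theta> \<tau> * X \<tau> \<omega>)"
      by (simp add: mult.assoc)
  qed
qed

lemma cont_nn_integral:
  fixes f :: "real \<Rightarrow> real"
  assumes fc: "continuous_on {0..T} f" and f0: "\<And>s. s \<in> {0..T} \<Longrightarrow> f s \<ge> 0"
  shows "ennreal (integral {0..T} f) = (\<integral>\<^sup>+s. ennreal (indicator {0..T} s * f s) \<partial>lborel)"
proof -
  have "(f has_integral integral {0..T} f) {0..T}"
    using integrable_continuous_real[OF fc] by (simp add: has_integral_integral)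
  then have "((\<lambda>s. if s \<in> {0..T} then f s else 0) has_integral integral {0..T} f) UNIV"
    by (subst has_integral_restrict_UNIV)
  moreover have "(\<lambda>s. if s \<in> {0..T} then f s else 0) = (\<lambda>s. indicator {0..T} s * f s)"
    by (auto simp: fun_eq_iff indicator_def)
  ultimately have "((\<lambda>s. indicator {0..T} s * f s) has_integral integral {0..T} f) UNIV" by simp
  moreover have "(\<lambda>s. indicator {0..T} s * f s) \<in> borel_measurable borel"
    using borel_measurable_continuous_on_indicator[OF _ fc] by simp
  ultimately have "integral\<^sup>N lborel (\<lambda>s. indicator {0..T} s * f s) = integral {0..T} f"
    by (intro nn_integral_has_integral_lborel) (auto simp: indicator_def f0)
  then show ?thesis by simp
qed

lemma Theta_bound:
  fixes \<theta> :: "real \<Rightarrow> real"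
  assumes thc: "continuous_on {0..T} \<theta>" and thb: "\<forall>t\<in>{0..T}. \<bar>\<theta> t\<bar> \<le> L" and L: "L \<ge> 0"
    and s: "s \<in> {0..T}"
  shows "\<bar>integral {0..s} \<theta>\<bar> \<le> L * T"
proof -
  have "continuous_on {0..s} \<theta>" using s by (intro continuous_on_subset[OF thc]) auto
  then have "norm (integral {0..s} \<theta>) \<le> L * (s - 0)"
    using integral_bound[of 0 s \<theta> L] s thb by auto
  also have "\<dots> \<le> L * T" using s L by (intro mult_left_mono) auto
  finally show ?thesis by simp
qed

lemma Y_bound:
  fixes \<theta> :: "real \<Rightarrow> real"
  assumes hs: "hermite_setting M H Z WI" and T: "T > 0"
    and thc: "continuous_on {0..T} \<theta>" and thb: "\<forall>t\<in>{0..T}. \<bar>\<theta> t\<bar> \<le> L" and L: "L \<ge> 0"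
    and sde: "solves_sde M T x0 \<epsilon> \<theta> Z X" and \<omega>: "\<omega> \<in> space M" and \<tau>: "\<tau> \<in> {0..T}"
  shows "\<bar>X \<tau> \<omega> - det_sol x0 \<theta> \<tau>\<bar> \<le> \<bar>\<epsilon>\<bar> * (\<bar>Z \<tau> \<omega>\<bar> + exp (2 * L * T) * L * integral {0..T} (\<lambda>s. \<bar>Z s \<omega>\<bar>))"
proof -
  have Xc: "continuous_on {0..T} (\<lambda>s. X s \<omega>)"
    and Xeq: "\<forall>t\<in>{0..T}. X t \<omega> = x0 + integral {0..t} (\<lambda>s. \<theta> s * X s \<omega>) + \<epsilon> * Z t \<omega>"
    using sde \<omega> unfolding solves_sde_def by auto
  have Zc: "continuous_on {0..T} (\<lambda>s. Z s \<omega>)"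
    using hu4[OF hs] \<omega> by (auto intro: continuous_on_subset)
  define q where "q = (\<lambda>s. exp (- integral {0..s} \<theta>) * \<theta> s)"
  have qc: "continuous_on {0..T} q" unfolding q_def
    using Theta_cont[OF thc] thc by (intro continuous_intros)
  have qb: "\<bar>q s\<bar> \<le> exp (L * T) * L" if s: "s \<in> {0..T}" for s
  proof -
    have e1: "exp (- integral {0..s} \<theta>) \<le> exp (L * T)" using Theta_bound[OF thc thb L s] by simp
    have t1: "\<bar>\<theta> s\<bar> \<le> L" using thb s by blast
    have "\<bar>q s\<bar> = exp (- integral {0..s} \<theta>) * \<bar>\<theta> s\<bar>" by (simp add: q_def abs_mult)
    also have "\<dots> \<le> exp (L * T) * L" by (rule mult_mono[OF e1 t1]) auto
    finally show ?thesis .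
  qed
  have X: "X \<tau> \<omega> = det_sol x0 \<theta> \<tau> + \<epsilon> * Z \<tau> \<omega>
           + \<epsilon> * exp (integral {0..\<tau>} \<theta>) * integral {0..\<tau>} (\<lambda>s. q s * Z s \<omega>)"
    using sde_formula[OF thc Xc Zc Xeq \<tau>] by (simp add: q_def)
  have cs: "continuous_on {0..\<tau>} (\<lambda>s. q s * Z s \<omega>)" "continuous_on {0..\<tau>} (\<lambda>s. exp (L * T) * L * \<bar>Z s \<omega>\<bar>)"
    using \<tau> qc Zc by (auto intro!: continuous_intros intro: continuous_on_subset)
  have "\<bar>integral {0..\<tau>} (\<lambda>s. q s * Z s \<omega>)\<bar> \<le> integral {0..\<tau>} (\<lambda>s. exp (L * T) * L * \<bar>Z s \<omega>\<bar>)"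
    using integral_norm_bound_integral[OF integrable_continuous_real[OF cs(1)] integrable_continuous_real[OF cs(2)]]
      qb \<tau> by (force simp: abs_mult intro: mult_right_mono)
  also have "\<dots> \<le> integral {0..T} (\<lambda>s. exp (L * T) * L * \<bar>Z s \<omega>\<bar>)"
    using \<tau> L by (intro integral_subset_le integrable_continuous_real)
      (auto intro!: continuous_intros intro: continuous_on_subset[OF Zc])
  also have "\<dots> = exp (L * T) * L * integral {0..T} (\<lambda>s. \<bar>Z s \<omega>\<bar>)" by simp
  finally have V: "\<bar>integral {0..\<tau>} (\<lambda>s. q s * Z s \<omega>)\<bar> \<le> exp (L * T) * L * integral {0..T} (\<lambda>s. \<bar>Z s \<omega>\<bar>)" .
  have e: "exp (integral {0..\<tau>} \<theta>) \<le> exp (L * T)" using Theta_bound[OF thc thb L \<tau>] by simp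
  have A0: "integral {0..T} (\<lambda>s. \<bar>Z s \<omega>\<bar>) \<ge> 0" by (rule integral_nonneg) (auto intro!: integrable_continuous_real continuous_intros Zc)
  have "\<bar>exp (integral {0..\<tau>} \<theta>) * integral {0..\<tau>} (\<lambda>s. q s * Z s \<omega>)\<bar>
      \<le> exp (L * T) * (exp (L * T) * L * integral {0..T} (\<lambda>s. \<bar>Z s \<omega>\<bar>))"
    unfolding abs_mult using e V by (intro mult_mono) auto
  also have "\<dots> = exp (2 * L * T) * L * integral {0..T} (\<lambda>s. \<bar>Z s \<omega>\<bar>)"
  proof -
    have "exp (L * T) * exp (L * T) = exp (2 * L * T)" using exp_add[of "L * T" "L * T"] by (simp add: mult.assoc)
    then show ?thesis by (simp add: algebra_simps)
  qed
  finally have W: "\<bar>exp (integral {0..\<tau>} \<theta>) * integral {0..\<tau>} (\<lambda>s. q s * Z s \<omega>)\<bar>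
      \<le> exp (2 * L * T) * L * integral {0..T} (\<lambda>s. \<bar>Z s \<omega>\<bar>)" .
  have "\<bar>X \<tau> \<omega> - det_sol x0 \<theta> \<tau>\<bar> = \<bar>\<epsilon>\<bar> * \<bar>Z \<tau> \<omega> + exp (integral {0..\<tau>} \<theta>) * integral {0..\<tau>} (\<lambda>s. q s * Z s \<omega>)\<bar>"
    unfolding X by (simp add: abs_mult[symmetric] algebra_simps)
  also have "\<dots> \<le> \<bar>\<epsilon>\<bar> * (\<bar>Z \<tau> \<omega>\<bar> + exp (2 * L * T) * L * integral {0..T} (\<lambda>s. \<bar>Z s \<omega>\<bar>))"
    using W by (intro mult_left_mono) auto
  finally show ?thesis .
qed

lemma R_pointwise:
  fixes \<theta> G :: "real \<Rightarrow> real"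
  assumes hs: "hermite_setting M H Z WI" and T: "T > 0"
    and thc: "continuous_on {0..T} \<theta>" and thb: "\<forall>t\<in>{0..T}. \<bar>\<theta> t\<bar> \<le> L" and L: "L \<ge> 0"
    and sde: "solves_sde M T x0 \<epsilon> \<theta> Z X" and \<omega>: "\<omega> \<in> space M"
    and Gm: "G \<in> borel_measurable borel" and K: "\<And>u. \<bar>G u\<bar> \<le> K"
    and AB: "A < 0" "0 < B" and supp: "\<And>u. u \<notin> {A..B} \<Longrightarrow> G u = 0" and phi: "\<phi> > 0"
  shows "ennreal \<bar>(1 / \<phi>) * integral {0..T} (\<lambda>\<tau>. G ((\<tau> - t) / \<phi>) * (\<theta> \<tau> * (X \<tau> \<omega> - det_sol x0 \<theta> \<tau>)))\<bar>
    \<le> ennreal (K * L * \<bar>\<epsilon>\<bar>) * (\<integral>\<^sup>+s. ennreal (indicator {0..T} s * (indicator {t + A * \<phi>..t + B * \<phi>} s / \<phi>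
                  + exp (2 * L * T) * L * (B - A)) * \<bar>Z s \<omega>\<bar>) \<partial>lborel)"
proof -
  define W where "W = {t + A * \<phi>..t + B * \<phi>}"
  define c1 where "c1 = exp (2 * L * T) * L"
  define x where "x = det_sol x0 \<theta>"
  define Aw where "Aw = integral {0..T} (\<lambda>s. \<bar>Z s \<omega>\<bar>)"
  have K0: "K \<ge> 0" using K[of 0] by linarith
  have c1: "c1 \<ge> 0" using L by (simp add: c1_def)
  have Xc: "continuous_on {0..T} (\<lambda>s. X s \<omega>)" using sde \<omega> unfolding solves_sde_def by auto
  have Zc: "continuous_on {0..T} (\<lambda>s. Z s \<omega>)"
    using hu4[OF hs] \<omega> by (auto intro: continuous_on_subset)
  have xc: "continuous_on {0..T} x" unfolding x_def det_sol_def[abs_def]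
    using Theta_cont[OF thc] by (intro continuous_intros)
  have Aw0: "Aw \<ge> 0" unfolding Aw_def
    by (rule integral_nonneg) (auto intro!: integrable_continuous_real continuous_intros Zc)
  have AwE: "ennreal Aw = (\<integral>\<^sup>+s. ennreal (indicator {0..T} s * \<bar>Z s \<omega>\<bar>) \<partial>lborel)"
    unfolding Aw_def by (rule cont_nn_integral) (auto intro!: continuous_intros Zc)
  define g where "g = (\<lambda>\<tau>. \<theta> \<tau> * (X \<tau> \<omega> - x \<tau>))"
  have gc: "continuous_on {0..T} g" unfolding g_def using thc Xc xc by (intro continuous_intros)
  have si: "set_integrable lborel {0..T} (\<lambda>\<tau>. G ((\<tau> - t) / \<phi>) * g \<tau>)" by (rule set_int_G[OF Gm K gc])
  have zm: "(\<lambda>s. indicator {0..T} s * \<bar>Z s \<omega>\<bar>) \<in> borel_measurable borel"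
    using borel_measurable_continuous_on_indicator[OF _ continuous_on_rabs[OF Zc]] by simp
  have zwm: "(\<lambda>s. indicator W s * (indicator {0..T} s * \<bar>Z s \<omega>\<bar>)) \<in> borel_measurable borel"
    using zm unfolding W_def by measurable
  have "ennreal \<bar>integral {0..T} (\<lambda>\<tau>. G ((\<tau> - t) / \<phi>) * g \<tau>)\<bar>
      = ennreal (norm (LINT \<tau>|lborel. indicator {0..T} \<tau> *\<^sub>R (G ((\<tau> - t) / \<phi>) * g \<tau>)))"
    using set_borel_integral_eq_integral(2)[OF si] unfolding set_lebesgue_integral_def by simp
  also have "\<dots> \<le> (\<integral>\<^sup>+\<tau>. norm (indicator {0..T} \<tau> *\<^sub>R (G ((\<tau> - t) / \<phi>) * g \<tau>)) \<partial>lborel)"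
    using integral_norm_bound_ennreal[OF si[unfolded set_integrable_def]] .
  also have "\<dots> \<le> (\<integral>\<^sup>+\<tau>. ennreal (K * L * \<bar>\<epsilon>\<bar>) * (ennreal (indicator W \<tau> * (indicator {0..T} \<tau> * \<bar>Z \<tau> \<omega>\<bar>))
                    + ennreal (c1 * Aw) * ennreal (indicator W \<tau> * indicator {0..T} \<tau>)) \<partial>lborel)"
  proof (intro nn_integral_mono)
    fix \<tau>
    show "ennreal (norm (indicator {0..T} \<tau> *\<^sub>R (G ((\<tau> - t) / \<phi>) * g \<tau>)))
      \<le> ennreal (K * L * \<bar>\<epsilon>\<bar>) * (ennreal (indicator W \<tau> * (indicator {0..T} \<tau> * \<bar>Z \<tau> \<omega>\<bar>))
                    + ennreal (c1 * Aw) * ennreal (indicator W \<tau> * indicator {0..T} \<tau>))"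
    proof (cases "\<tau> \<in> {0..T} \<and> \<tau> \<in> W")
      case True
      have Gb: "\<bar>G ((\<tau> - t) / \<phi>)\<bar> \<le> K" by (rule K)
      have tb: "\<bar>\<theta> \<tau>\<bar> \<le> L" using thb True by blast
      have yb: "\<bar>X \<tau> \<omega> - x \<tau>\<bar> \<le> \<bar>\<epsilon>\<bar> * (\<bar>Z \<tau> \<omega>\<bar> + c1 * Aw)"
        using Y_bound[OF hs T thc thb L sde \<omega>, of \<tau>] True by (simp add: x_def c1_def Aw_def)
      have "\<bar>G ((\<tau> - t) / \<phi>) * g \<tau>\<bar> \<le> K * (L * (\<bar>\<epsilon>\<bar> * (\<bar>Z \<tau> \<omega>\<bar> + c1 * Aw)))"
        unfolding g_def abs_mult using Gb tb yb K0 L by (intro mult_mono) auto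
      then have "ennreal (norm (indicator {0..T} \<tau> *\<^sub>R (G ((\<tau> - t) / \<phi>) * g \<tau>)))
          \<le> ennreal (K * L * \<bar>\<epsilon>\<bar> * (\<bar>Z \<tau> \<omega>\<bar> + c1 * Aw))"
        using True by (intro ennreal_leI) (simp add: algebra_simps)
      also have "\<dots> = ennreal (K * L * \<bar>\<epsilon>\<bar>) * ennreal (\<bar>Z \<tau> \<omega>\<bar> + c1 * Aw)"
        by (rule ennreal_mult) (use K0 L c1 Aw0 in auto)
      also have "ennreal (\<bar>Z \<tau> \<omega>\<bar> + c1 * Aw) = ennreal \<bar>Z \<tau> \<omega>\<bar> + ennreal (c1 * Aw)"
        by (rule ennreal_plus) (use c1 Aw0 in auto)
      finally show ?thesis using True by simp
    next
      case False
      have "G ((\<tau> - t) / \<phi>) = 0" if "\<tau> \<in> {0..T}"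
      proof -
        have "\<tau> \<notin> W" using False that by blast
        then have "(\<tau> - t) / \<phi> \<notin> {A..B}" using phi by (auto simp: W_def field_simps)
        then show ?thesis by (rule supp)
      qed
      then have "indicator {0..T} \<tau> *\<^sub>R (G ((\<tau> - t) / \<phi>) * g \<tau>) = 0" by (auto simp: indicator_def)
      then show ?thesis by (metis norm_zero ennreal_0 zero_le)
    qed
  qed
  also have "\<dots> = ennreal (K * L * \<bar>\<epsilon>\<bar>) * ((\<integral>\<^sup>+\<tau>. ennreal (indicator W \<tau> * (indicator {0..T} \<tau> * \<bar>Z \<tau> \<omega>\<bar>)) \<partial>lborel)
                    + ennreal (c1 * Aw) * (\<integral>\<^sup>+\<tau>. ennreal (indicator W \<tau> * indicator {0..T} \<tau>) \<partial>lborel))"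
    using zwm by (simp add: nn_integral_cmult nn_integral_add W_def)
  also have "\<dots> \<le> ennreal (K * L * \<bar>\<epsilon>\<bar>) * ((\<integral>\<^sup>+\<tau>. ennreal (indicator W \<tau> * (indicator {0..T} \<tau> * \<bar>Z \<tau> \<omega>\<bar>)) \<partial>lborel)
                    + ennreal (c1 * Aw) * ennreal ((B - A) * \<phi>))"
  proof -
    have "(\<integral>\<^sup>+\<tau>. ennreal (indicator W \<tau> * indicator {0..T} \<tau>) \<partial>lborel) \<le> (\<integral>\<^sup>+\<tau>. ennreal (indicator W \<tau>) \<partial>lborel)"
      by (intro nn_integral_mono ennreal_leI) (auto simp: indicator_def)
    also have "\<dots> = ennreal ((B - A) * \<phi>)"
      using AB phi by (simp add: W_def ennreal_indicator algebra_simps mult_right_mono)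
    finally show ?thesis by (intro mult_left_mono add_left_mono) auto
  qed
  finally have I: "ennreal \<bar>integral {0..T} (\<lambda>\<tau>. G ((\<tau> - t) / \<phi>) * g \<tau>)\<bar>
     \<le> ennreal (K * L * \<bar>\<epsilon>\<bar>) * ((\<integral>\<^sup>+\<tau>. ennreal (indicator W \<tau> * (indicator {0..T} \<tau> * \<bar>Z \<tau> \<omega>\<bar>)) \<partial>lborel)
                    + ennreal (c1 * Aw) * ennreal ((B - A) * \<phi>))" .
  define P where "P = (\<integral>\<^sup>+\<tau>. ennreal (indicator W \<tau> * (indicator {0..T} \<tau> * \<bar>Z \<tau> \<omega>\<bar>)) \<partial>lborel)"
  define Q where "Q = (\<integral>\<^sup>+s. ennreal (indicator {0..T} s * \<bar>Z s \<omega>\<bar>) \<partial>lborel)"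
  have rhs: "(\<integral>\<^sup>+s. ennreal (indicator {0..T} s * (indicator W s / \<phi> + c1 * (B - A)) * \<bar>Z s \<omega>\<bar>) \<partial>lborel)
      = ennreal (1 / \<phi>) * P + ennreal (c1 * (B - A)) * Q"
  proof -
    have "(\<lambda>s. ennreal (indicator {0..T} s * (indicator W s / \<phi> + c1 * (B - A)) * \<bar>Z s \<omega>\<bar>))
        = (\<lambda>s. ennreal (1 / \<phi>) * ennreal (indicator W s * (indicator {0..T} s * \<bar>Z s \<omega>\<bar>))
              + ennreal (c1 * (B - A)) * ennreal (indicator {0..T} s * \<bar>Z s \<omega>\<bar>))"
    proof
      fix s
      define a where "a = 1 / \<phi> * (indicator W s * (indicator {0..T} s * \<bar>Z s \<omega>\<bar>))"
      define b where "b = c1 * (B - A) * (indicator {0..T} s * \<bar>Z s \<omega>\<bar>)"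
      have a0: "a \<ge> 0" using phi by (simp add: a_def)
      have b0: "b \<ge> 0" using c1 AB by (simp add: b_def)
      have "indicator {0..T} s * (indicator W s / \<phi> + c1 * (B - A)) * \<bar>Z s \<omega>\<bar> = a + b"
        using phi by (simp add: a_def b_def field_simps)
      then have "ennreal (indicator {0..T} s * (indicator W s / \<phi> + c1 * (B - A)) * \<bar>Z s \<omega>\<bar>) = ennreal a + ennreal b"
        using a0 b0 by (simp add: ennreal_plus)
      also have "ennreal a = ennreal (1 / \<phi>) * ennreal (indicator W s * (indicator {0..T} s * \<bar>Z s \<omega>\<bar>))"
        unfolding a_def by (rule ennreal_mult) (use phi in auto)
      also have "ennreal b = ennreal (c1 * (B - A)) * ennreal (indicator {0..T} s * \<bar>Z s \<omega>\<bar>)"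
        unfolding b_def by (rule ennreal_mult) (use c1 AB in auto)
      finally show "ennreal (indicator {0..T} s * (indicator W s / \<phi> + c1 * (B - A)) * \<bar>Z s \<omega>\<bar>)
        = ennreal (1 / \<phi>) * ennreal (indicator W s * (indicator {0..T} s * \<bar>Z s \<omega>\<bar>))
              + ennreal (c1 * (B - A)) * ennreal (indicator {0..T} s * \<bar>Z s \<omega>\<bar>)" .
    qed
    then show ?thesis using zm zwm by (simp add: nn_integral_cmult nn_integral_add P_def Q_def)
  qed
  have "ennreal \<bar>(1 / \<phi>) * integral {0..T} (\<lambda>\<tau>. G ((\<tau> - t) / \<phi>) * g \<tau>)\<bar>
      = ennreal (1 / \<phi>) * ennreal \<bar>integral {0..T} (\<lambda>\<tau>. G ((\<tau> - t) / \<phi>) * g \<tau>)\<bar>"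
    unfolding abs_mult using phi by (subst ennreal_mult) auto
  also have "\<dots> \<le> ennreal (1 / \<phi>) * (ennreal (K * L * \<bar>\<epsilon>\<bar>) * (P + ennreal (c1 * Aw) * ennreal ((B - A) * \<phi>)))"
    using I by (intro mult_left_mono) (auto simp: P_def)
  also have "\<dots> = ennreal (K * L * \<bar>\<epsilon>\<bar>) * (ennreal (1 / \<phi>) * P + ennreal (c1 * (B - A)) * Q)"
  proof -
    have "ennreal (1 / \<phi>) * (ennreal (c1 * Aw) * ennreal ((B - A) * \<phi>)) = ennreal (c1 * (B - A)) * ennreal Aw"
    proof -
      have e1: "ennreal (c1 * Aw) * ennreal ((B - A) * \<phi>) = ennreal (c1 * Aw * ((B - A) * \<phi>))"
        by (rule ennreal_mult[symmetric]) (use c1 Aw0 AB phi in auto)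
      have e2: "ennreal (1 / \<phi>) * ennreal (c1 * Aw * ((B - A) * \<phi>)) = ennreal (1 / \<phi> * (c1 * Aw * ((B - A) * \<phi>)))"
        by (rule ennreal_mult[symmetric]) (use c1 Aw0 AB phi in auto)
      have e3: "1 / \<phi> * (c1 * Aw * ((B - A) * \<phi>)) = c1 * (B - A) * Aw" using phi by (simp add: field_simps)
      have e4: "ennreal (c1 * (B - A) * Aw) = ennreal (c1 * (B - A)) * ennreal Aw"
        by (rule ennreal_mult) (use c1 Aw0 AB phi in auto)
      show ?thesis unfolding e1 e2 e3 e4 ..
    qed
    note h = this
    have "ennreal (1 / \<phi>) * (ennreal (K * L * \<bar>\<epsilon>\<bar>) * (P + ennreal (c1 * Aw) * ennreal ((B - A) * \<phi>)))
        = ennreal (K * L * \<bar>\<epsilon>\<bar>) * (ennreal (1 / \<phi>) * P + ennreal (1 / \<phi>) * (ennreal (c1 * Aw) * ennreal ((B - A) * \<phi>)))"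
      by (simp only: distrib_left mult_ac)
    also have "\<dots> = ennreal (K * L * \<bar>\<epsilon>\<bar>) * (ennreal (1 / \<phi>) * P + ennreal (c1 * (B - A)) * Q)"
      unfolding h AwE Q_def ..
    finally show ?thesis .
  qed
  finally show ?thesis unfolding rhs[symmetric] by (simp add: W_def c1_def g_def x_def)
qed

lemma EZ2:
  assumes hs: "hermite_setting M H Z WI" and H: "H > 0" and s: "s \<in> {0..T}"
  shows "(\<integral>\<^sup>+\<omega>. ennreal ((Z s \<omega>)\<^sup>2) \<partial>M) \<le> ennreal (T powr (2 * H))"
proof -
  have i: "integrable M (\<lambda>\<omega>. (Z s \<omega>)\<^sup>2)" using hu2[OF hs] s by auto
  have "(\<integral>\<^sup>+\<omega>. ennreal ((Z s \<omega>)\<^sup>2) \<partial>M) = ennreal (\<integral>\<omega>. (Z s \<omega>)\<^sup>2 \<partial>M)"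
    by (rule nn_integral_eq_integral[OF i]) auto
  also have "(\<integral>\<omega>. (Z s \<omega>)\<^sup>2 \<partial>M) = (\<integral>\<omega>. Z s \<omega> * Z s \<omega> \<partial>M)" by (simp add: power2_eq_square)
  also have "\<dots> = (s powr (2*H) + s powr (2*H) - \<bar>s - s\<bar> powr (2*H)) / 2"
    by (rule hu3[OF hs, rule_format]) (use s in auto)
  also have "\<dots> = s powr (2 * H)" by simp
  also have "\<dots> \<le> T powr (2 * H)" using s H by (intro powr_mono2) auto
  finally show ?thesis by (simp add: ennreal_leI)
qed

lemma R_L2:
  fixes \<theta> G :: "real \<Rightarrow> real"
  assumes hs: "hermite_setting M H Z WI" and H: "H > 0" and T: "T > 0"
    and thc: "continuous_on {0..T} \<theta>" and thb: "\<forall>t\<in>{0..T}. \<bar>\<theta> t\<bar> \<le> L" and L: "L \<ge> 0"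
    and sde: "solves_sde M T x0 \<epsilon> \<theta> Z X"
    and Gm: "G \<in> borel_measurable borel" and K: "\<And>u. \<bar>G u\<bar> \<le> K"
    and AB: "A < 0" "0 < B" and supp: "\<And>u. u \<notin> {A..B} \<Longrightarrow> G u = 0" and phi: "\<phi> > 0"
  shows "(\<integral>\<^sup>+\<omega>. ennreal (((1 / \<phi>) * integral {0..T} (\<lambda>\<tau>. G ((\<tau> - t) / \<phi>) * (\<theta> \<tau> * (X \<tau> \<omega> - det_sol x0 \<theta> \<tau>))))\<^sup>2) \<partial>M)
    \<le> ennreal ((K * L * \<epsilon>)\<^sup>2 * ((B - A) * (1 + exp (2 * L * T) * L * T))\<^sup>2 * T powr (2 * H))"
proof -
  interpret P: prob_space M by (rule hu1[OF hs])
  interpret PS: pair_sigma_finite M lborel by unfold_locales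
  define c1 where "c1 = exp (2 * L * T) * L"
  have c1: "c1 \<ge> 0" using L by (simp add: c1_def)
  define W where "W = {t + A * \<phi>..t + B * \<phi>}"
  define kf where "kf = (\<lambda>s. indicator {0..T} s * (indicator W s / \<phi> + c1 * (B - A)))"
  have kf0: "kf s \<ge> 0" for s using phi c1 AB by (simp add: kf_def)
  have kfm: "kf \<in> borel_measurable borel" unfolding kf_def W_def by measurable
  define \<kappa> where "\<kappa> = (B - A) * (1 + c1 * T)"
  have \<kappa>0: "\<kappa> \<ge> 0" using AB c1 T by (simp add: \<kappa>_def)
  have K0: "K \<ge> 0" using K[of 0] by linarith
  define E0 where "E0 = ennreal (K * L * \<bar>\<epsilon>\<bar>)"
  define R where "R = (\<lambda>\<omega>. (1 / \<phi>) * integral {0..T} (\<lambda>\<tau>. G ((\<tau> - t) / \<phi>) * (\<theta> \<tau> * (X \<tau> \<omega> - det_sol x0 \<theta> \<tau>))))"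
  define Zi where "Zi = (\<lambda>s \<omega>. indicator {0..T} s * \<bar>Z s \<omega>\<bar>)"
  have Zij: "(\<lambda>p. Zi (snd p) (fst p)) \<in> borel_measurable (M \<Otimes>\<^sub>M lborel)"
  proof -
    have "(\<lambda>p. \<bar>indicator {0..T} (snd p) * Z (snd p) (fst p)\<bar>) \<in> borel_measurable (M \<Otimes>\<^sub>M lborel)"
      using Z_joint[OF hs T] by measurable
    then show ?thesis by (simp add: Zi_def abs_mult)
  qed
  have kint: "(\<integral>\<^sup>+s. ennreal (kf s) \<partial>lborel) \<le> ennreal \<kappa>"
  proof -
    have "(\<lambda>s. ennreal (kf s)) = (\<lambda>s. ennreal (1 / \<phi>) * ennreal (indicator {0..T} s * indicator W s)
          + ennreal (c1 * (B - A)) * ennreal (indicator {0..T} s))"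
    proof
      fix s
      define a where "a = 1 / \<phi> * (indicator {0..T} s * indicator W s)"
      define b where "b = c1 * (B - A) * indicator {0..T} s"
      have a0: "a \<ge> 0" using phi by (simp add: a_def)
      have b0: "b \<ge> 0" using c1 AB by (simp add: b_def)
      have "kf s = a + b" by (simp add: kf_def a_def b_def field_simps)
      then have "ennreal (kf s) = ennreal a + ennreal b" using a0 b0 by (simp add: ennreal_plus)
      also have "ennreal a = ennreal (1 / \<phi>) * ennreal (indicator {0..T} s * indicator W s)"
        unfolding a_def by (rule ennreal_mult) (use phi in auto)
      also have "ennreal b = ennreal (c1 * (B - A)) * ennreal (indicator {0..T} s)"
        unfolding b_def by (rule ennreal_mult) (use c1 AB in auto)
      finally show "ennreal (kf s) = ennreal (1 / \<phi>) * ennreal (indicator {0..T} s * indicator W s)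
          + ennreal (c1 * (B - A)) * ennreal (indicator {0..T} s)" .
    qed
    then have "(\<integral>\<^sup>+s. ennreal (kf s) \<partial>lborel) = ennreal (1 / \<phi>) * (\<integral>\<^sup>+s. ennreal (indicator {0..T} s * indicator W s) \<partial>lborel)
        + ennreal (c1 * (B - A)) * (\<integral>\<^sup>+s. ennreal (indicator {0..T} s) \<partial>lborel)"
      by (simp add: nn_integral_add nn_integral_cmult W_def)
    also have "\<dots> \<le> ennreal (1 / \<phi>) * ennreal ((B - A) * \<phi>) + ennreal (c1 * (B - A)) * ennreal T"
    proof (intro add_mono mult_left_mono)
      have "(\<integral>\<^sup>+s. ennreal (indicator {0..T} s * indicator W s) \<partial>lborel) \<le> (\<integral>\<^sup>+s. ennreal (indicator W s) \<partial>lborel)"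
        by (intro nn_integral_mono ennreal_leI) (auto simp: indicator_def)
      also have "\<dots> = ennreal ((B - A) * \<phi>)"
        using AB phi by (simp add: W_def ennreal_indicator algebra_simps mult_right_mono)
      finally show "(\<integral>\<^sup>+s. ennreal (indicator {0..T} s * indicator W s) \<partial>lborel) \<le> ennreal ((B - A) * \<phi>)" .
      show "(\<integral>\<^sup>+s. ennreal (indicator {0..T} s) \<partial>lborel) \<le> ennreal T"
        using T by (simp add: ennreal_indicator)
    qed auto
    also have "\<dots> = ennreal \<kappa>"
    proof -
      have e1: "ennreal (1 / \<phi>) * ennreal ((B - A) * \<phi>) = ennreal (B - A)"
        using phi AB by (subst ennreal_mult[symmetric]) auto
      have e2: "ennreal (c1 * (B - A)) * ennreal T = ennreal (c1 * (B - A) * T)"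
        using c1 AB T by (subst ennreal_mult[symmetric]) auto
      have e3: "ennreal (B - A) + ennreal (c1 * (B - A) * T) = ennreal ((B - A) + c1 * (B - A) * T)"
        using c1 AB T by (subst ennreal_plus) auto
      show ?thesis unfolding e1 e2 e3 by (simp add: \<kappa>_def algebra_simps)
    qed
    finally show ?thesis .
  qed
  have pw: "ennreal ((R \<omega>)\<^sup>2) \<le> E0\<^sup>2 * ennreal \<kappa> * (\<integral>\<^sup>+s. ennreal (kf s * (Zi s \<omega>)\<^sup>2) \<partial>lborel)"
    if \<omega>: "\<omega> \<in> space M" for \<omega>
  proof -
    have zm: "(\<lambda>s. Zi s \<omega>) \<in> borel_measurable borel"
    proof -
      have Zc: "continuous_on {0..T} (\<lambda>s. Z s \<omega>)"
        using hu4[OF hs] \<omega> by (auto intro: continuous_on_subset)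
      show ?thesis unfolding Zi_def
        using borel_measurable_continuous_on_indicator[OF _ continuous_on_rabs[OF Zc]] by simp
    qed
    have b1: "ennreal \<bar>R \<omega>\<bar> \<le> E0 * (\<integral>\<^sup>+s. ennreal (kf s * Zi s \<omega>) \<partial>lborel)"
    proof -
      have "ennreal \<bar>R \<omega>\<bar> \<le> E0 * (\<integral>\<^sup>+s. ennreal (indicator {0..T} s * (indicator W s / \<phi> + c1 * (B - A)) * \<bar>Z s \<omega>\<bar>) \<partial>lborel)"
        unfolding R_def E0_def W_def c1_def by (rule R_pointwise[OF hs T thc thb L sde \<omega> Gm K AB supp phi])
      also have "(\<lambda>s. ennreal (indicator {0..T} s * (indicator W s / \<phi> + c1 * (B - A)) * \<bar>Z s \<omega>\<bar>)) = (\<lambda>s. ennreal (kf s * Zi s \<omega>))"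
        by (auto simp: fun_eq_iff kf_def Zi_def indicator_def)
      finally show ?thesis .
    qed
    have cs: "(\<integral>\<^sup>+s. ennreal (kf s * Zi s \<omega>) \<partial>lborel)\<^sup>2
        \<le> (\<integral>\<^sup>+s. ennreal (kf s) \<partial>lborel) * (\<integral>\<^sup>+s. ennreal (kf s * (Zi s \<omega>)\<^sup>2) \<partial>lborel)"
    proof -
      have fm: "(\<lambda>s. ennreal (sqrt (kf s))) \<in> borel_measurable lborel" using kfm by measurable
      have gm: "(\<lambda>s. ennreal (sqrt (kf s) * Zi s \<omega>)) \<in> borel_measurable lborel" using kfm zm by measurable
      have Zi0: "Zi s \<omega> \<ge> 0" for s by (simp add: Zi_def)
      have e1: "ennreal (sqrt (kf s)) * ennreal (sqrt (kf s) * Zi s \<omega>) = ennreal (kf s * Zi s \<omega>)" for s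
        using kf0[of s] Zi0[of s] by (simp add: ennreal_mult[symmetric] mult.assoc[symmetric])
      have e2: "(ennreal (sqrt (kf s)))\<^sup>2 = ennreal (kf s)" for s
        using kf0[of s] by (simp add: ennreal_power)
      have e3: "(ennreal (sqrt (kf s) * Zi s \<omega>))\<^sup>2 = ennreal (kf s * (Zi s \<omega>)\<^sup>2)" for s
        using kf0[of s] Zi0[of s] by (simp add: ennreal_power power_mult_distrib)
      show ?thesis using Cauchy_Schwarz_nn_integral[OF fm gm] by (simp add: e1 e2 e3)
    qed
    have "ennreal ((R \<omega>)\<^sup>2) = (ennreal \<bar>R \<omega>\<bar>)\<^sup>2" by (simp add: ennreal_power)
    also have "\<dots> \<le> (E0 * (\<integral>\<^sup>+s. ennreal (kf s * Zi s \<omega>) \<partial>lborel))\<^sup>2"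
      by (rule power_mono[OF b1]) simp
    also have "\<dots> = E0\<^sup>2 * (\<integral>\<^sup>+s. ennreal (kf s * Zi s \<omega>) \<partial>lborel)\<^sup>2" by (simp add: power_mult_distrib)
    also have "\<dots> \<le> E0\<^sup>2 * ((\<integral>\<^sup>+s. ennreal (kf s) \<partial>lborel) * (\<integral>\<^sup>+s. ennreal (kf s * (Zi s \<omega>)\<^sup>2) \<partial>lborel))"
      by (rule mult_left_mono[OF cs]) simp
    also have "\<dots> \<le> E0\<^sup>2 * (ennreal \<kappa> * (\<integral>\<^sup>+s. ennreal (kf s * (Zi s \<omega>)\<^sup>2) \<partial>lborel))"
      by (intro mult_left_mono mult_right_mono kint) auto
    finally show ?thesis by (simp add: mult.assoc)
  qed
  have jm: "(\<lambda>p. ennreal (kf (snd p) * (Zi (snd p) (fst p))\<^sup>2)) \<in> borel_measurable (M \<Otimes>\<^sub>M lborel)"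
  proof -
    have "(\<lambda>p. kf (snd p)) \<in> borel_measurable (M \<Otimes>\<^sub>M lborel)"
      by (rule measurable_compose[OF measurable_snd]) (use kfm in simp)
    then show ?thesis using Zij by measurable
  qed
  have "(\<integral>\<^sup>+\<omega>. ennreal ((R \<omega>)\<^sup>2) \<partial>M) \<le> (\<integral>\<^sup>+\<omega>. E0\<^sup>2 * ennreal \<kappa> * (\<integral>\<^sup>+s. ennreal (kf s * (Zi s \<omega>)\<^sup>2) \<partial>lborel) \<partial>M)"
    using pw by (intro nn_integral_mono) auto
  also have "\<dots> = E0\<^sup>2 * ennreal \<kappa> * (\<integral>\<^sup>+\<omega>. (\<integral>\<^sup>+s. ennreal (kf s * (Zi s \<omega>)\<^sup>2) \<partial>lborel) \<partial>M)"
  proof (rule nn_integral_cmult)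
    show "(\<lambda>\<omega>. \<integral>\<^sup>+s. ennreal (kf s * (Zi s \<omega>)\<^sup>2) \<partial>lborel) \<in> borel_measurable M"
      using lborel.borel_measurable_nn_integral_fst[OF jm] by simp
  qed
  also have "(\<integral>\<^sup>+\<omega>. (\<integral>\<^sup>+s. ennreal (kf s * (Zi s \<omega>)\<^sup>2) \<partial>lborel) \<partial>M)
      = (\<integral>\<^sup>+s. (\<integral>\<^sup>+\<omega>. ennreal (kf s * (Zi s \<omega>)\<^sup>2) \<partial>M) \<partial>lborel)"
    using PS.Fubini[OF jm] by simp
  also have "\<dots> \<le> (\<integral>\<^sup>+s. ennreal (kf s) * ennreal (T powr (2 * H)) \<partial>lborel)"
  proof (intro nn_integral_mono)
    fix s
    show "(\<integral>\<^sup>+\<omega>. ennreal (kf s * (Zi s \<omega>)\<^sup>2) \<partial>M) \<le> ennreal (kf s) * ennreal (T powr (2 * H))"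
    proof (cases "s \<in> {0..T}")
      case True
      have "(\<integral>\<^sup>+\<omega>. ennreal (kf s * (Zi s \<omega>)\<^sup>2) \<partial>M) = (\<integral>\<^sup>+\<omega>. ennreal (kf s) * ennreal ((Z s \<omega>)\<^sup>2) \<partial>M)"
        using True kf0[of s] by (intro nn_integral_cong) (simp add: Zi_def ennreal_mult)
      also have "\<dots> = ennreal (kf s) * (\<integral>\<^sup>+\<omega>. ennreal ((Z s \<omega>)\<^sup>2) \<partial>M)"
        using hu2[OF hs] True by (intro nn_integral_cmult) auto
      also have "\<dots> \<le> ennreal (kf s) * ennreal (T powr (2 * H))"
        by (rule mult_left_mono[OF EZ2[OF hs H True]]) simp
      finally show ?thesis .
    next
      case False
      then show ?thesis by (simp add: kf_def)
    qed
  qed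
  also have "\<dots> = ennreal (T powr (2 * H)) * (\<integral>\<^sup>+s. ennreal (kf s) \<partial>lborel)"
    using kfm by (simp add: nn_integral_multc mult.commute)
  also have "\<dots> \<le> ennreal (T powr (2 * H)) * ennreal \<kappa>" by (rule mult_left_mono[OF kint]) simp
  finally have "(\<integral>\<^sup>+\<omega>. ennreal ((R \<omega>)\<^sup>2) \<partial>M) \<le> E0\<^sup>2 * ennreal \<kappa> * (ennreal (T powr (2 * H)) * ennreal \<kappa>)"
    by (simp add: mult_left_mono)
  also have "\<dots> = ennreal ((K * L * \<epsilon>)\<^sup>2 * \<kappa>\<^sup>2 * T powr (2 * H))"
  proof -
    define Tp where "Tp = T powr (2 * H)"
    have Tp: "Tp \<ge> 0" by (simp add: Tp_def)
    have "ennreal ((K * L * \<bar>\<epsilon>\<bar>)\<^sup>2 * \<kappa> * (Tp * \<kappa>))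
        = ennreal ((K * L * \<bar>\<epsilon>\<bar>)\<^sup>2) * ennreal \<kappa> * (ennreal Tp * ennreal \<kappa>)"
      using \<kappa>0 Tp by (simp add: ennreal_mult)
    also have "ennreal ((K * L * \<bar>\<epsilon>\<bar>)\<^sup>2) = E0\<^sup>2"
      unfolding E0_def using K0 L by (simp add: ennreal_power)
    finally have "E0\<^sup>2 * ennreal \<kappa> * (ennreal Tp * ennreal \<kappa>) = ennreal ((K * L * \<bar>\<epsilon>\<bar>)\<^sup>2 * \<kappa> * (Tp * \<kappa>))" ..
    also have "(K * L * \<bar>\<epsilon>\<bar>)\<^sup>2 * \<kappa> * (Tp * \<kappa>) = (K * L * \<epsilon>)\<^sup>2 * \<kappa>\<^sup>2 * Tp"
      by (simp add: power2_eq_square abs_mult mult_ac)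
    finally show ?thesis by (simp add: Tp_def)
  qed
  finally show ?thesis by (simp add: R_def \<kappa>_def c1_def)
qed

lemma core:
  fixes \<theta> G :: "real \<Rightarrow> real"
  assumes hs: "hermite_setting M H Z WI" and H: "H > 0" and T: "T > 0"
    and thc: "continuous_on {0..T} \<theta>" and thb: "\<forall>t\<in>{0..T}. \<bar>\<theta> t\<bar> \<le> L" and L: "L \<ge> 0"
    and sde: "solves_sde M T x0 \<epsilon> \<theta> Z X"
    and Gm: "G \<in> borel_measurable borel" and K: "\<And>u. \<bar>G u\<bar> \<le> K"
    and AB: "A < 0" "0 < B" and supp: "\<And>u. u \<notin> {A..B} \<Longrightarrow> G u = 0" and phi: "\<phi> > 0"
    and bias: "\<bar>(1 / \<phi>) * integral {0..T} (\<lambda>\<tau>. G ((\<tau> - t) / \<phi>) * \<theta> \<tau> * det_sol x0 \<theta> \<tau>)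
                    - \<theta> t * det_sol x0 \<theta> t\<bar> \<le> Bb"
    and adm: "wiener_admissible H (\<lambda>\<tau>. G ((\<tau> - t) / \<phi>) * indicator {0..T} \<tau>)"
    and nb: "(\<integral>\<omega>. (WI (\<lambda>\<tau>. G ((\<tau> - t) / \<phi>) * indicator {0..T} \<tau>) \<omega>)\<^sup>2 \<partial>M) \<le> Nb"
  shows "integrable M (\<lambda>\<omega>. (kernel_est G \<phi> T \<epsilon> \<theta> X WI t \<omega> - \<theta> t * det_sol x0 \<theta> t)\<^sup>2) \<and>
         (\<integral>\<omega>. (kernel_est G \<phi> T \<epsilon> \<theta> X WI t \<omega> - \<theta> t * det_sol x0 \<theta> t)\<^sup>2 \<partial>M)
           \<le> 3 * (Bb\<^sup>2 + (K * L * \<epsilon>)\<^sup>2 * ((B - A) * (1 + exp (2 * L * T) * L * T))\<^sup>2 * T powr (2 * H)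
                  + (\<epsilon> / \<phi>)\<^sup>2 * Nb)"
proof -
  interpret P: prob_space M by (rule hu1[OF hs])
  define x where "x = det_sol x0 \<theta>"
  define g where "g = (\<lambda>\<tau>. G ((\<tau> - t) / \<phi>) * indicator {0..T} \<tau>)"
  define bi where "bi = (1 / \<phi>) * integral {0..T} (\<lambda>\<tau>. G ((\<tau> - t) / \<phi>) * \<theta> \<tau> * x \<tau>) - \<theta> t * x t"
  define R where "R = (\<lambda>\<omega>. (1 / \<phi>) * integral {0..T} (\<lambda>\<tau>. G ((\<tau> - t) / \<phi>) * (\<theta> \<tau> * (X \<tau> \<omega> - det_sol x0 \<theta> \<tau>))))"
  define N where "N = (\<lambda>\<omega>. (\<epsilon> / \<phi>) * WI g \<omega>)"
  define D where "D = (\<lambda>\<omega>. kernel_est G \<phi> T \<epsilon> \<theta> X WI t \<omega> - \<theta> t * det_sol x0 \<theta> t)"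
  define Rb where "Rb = (K * L * \<epsilon>)\<^sup>2 * ((B - A) * (1 + exp (2 * L * T) * L * T))\<^sup>2 * T powr (2 * H)"
  have Rb0: "Rb \<ge> 0" by (simp add: Rb_def)
  have xc: "continuous_on {0..T} x" unfolding x_def det_sol_def[abs_def]
    using Theta_cont[OF thc] by (intro continuous_intros)
  have Dsplit: "D \<omega> = bi + R \<omega> + N \<omega>" if \<omega>: "\<omega> \<in> space M" for \<omega>
  proof -
    have Xc: "continuous_on {0..T} (\<lambda>s. X s \<omega>)" using sde \<omega> unfolding solves_sde_def by auto
    have c1: "continuous_on {0..T} (\<lambda>\<tau>. \<theta> \<tau> * x \<tau>)" using thc xc by (intro continuous_intros)
    have c2: "continuous_on {0..T} (\<lambda>\<tau>. \<theta> \<tau> * (X \<tau> \<omega> - x \<tau>))" using thc xc Xc by (intro continuous_intros)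
    have i1: "(\<lambda>\<tau>. G ((\<tau> - t) / \<phi>) * (\<theta> \<tau> * x \<tau>)) integrable_on {0..T}"
      by (rule set_borel_integral_eq_integral(1)[OF set_int_G[OF Gm K c1]])
    have i2: "(\<lambda>\<tau>. G ((\<tau> - t) / \<phi>) * (\<theta> \<tau> * (X \<tau> \<omega> - x \<tau>))) integrable_on {0..T}"
      by (rule set_borel_integral_eq_integral(1)[OF set_int_G[OF Gm K c2]])
    have "integral {0..T} (\<lambda>\<tau>. G ((\<tau> - t) / \<phi>) * \<theta> \<tau> * X \<tau> \<omega>)
        = integral {0..T} (\<lambda>\<tau>. G ((\<tau> - t) / \<phi>) * (\<theta> \<tau> * x \<tau>) + G ((\<tau> - t) / \<phi>) * (\<theta> \<tau> * (X \<tau> \<omega> - x \<tau>)))"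
      by (intro integral_cong) (simp add: algebra_simps)
    also have "\<dots> = integral {0..T} (\<lambda>\<tau>. G ((\<tau> - t) / \<phi>) * (\<theta> \<tau> * x \<tau>)) + integral {0..T} (\<lambda>\<tau>. G ((\<tau> - t) / \<phi>) * (\<theta> \<tau> * (X \<tau> \<omega> - x \<tau>)))"
      by (rule integral_add[OF i1 i2])
    finally show ?thesis
      unfolding D_def kernel_est_def bi_def R_def N_def g_def x_def
      by (simp add: algebra_simps mult.assoc)
  qed
  have Em: "(\<lambda>\<omega>. integral {0..T} (\<lambda>\<tau>. G ((\<tau> - t) / \<phi>) * \<theta> \<tau> * X \<tau> \<omega>)) \<in> borel_measurable M"
    by (rule est_meas[OF hs T thc sde Gm K])
  have admg: "wiener_admissible H g" using adm by (simp add: g_def)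
  have WIm: "WI g \<in> borel_measurable M" and WI2: "integrable M (\<lambda>\<omega>. (WI g \<omega>)\<^sup>2)"
    using hu5[OF hs, rule_format, OF admg] by auto
  have Dm: "D \<in> borel_measurable M"
    unfolding D_def kernel_est_def g_def[symmetric] using Em WIm by measurable
  have Nm: "N \<in> borel_measurable M" unfolding N_def using WIm by measurable
  have Rm: "R \<in> borel_measurable M"
  proof -
    have "(\<lambda>\<omega>. D \<omega> - bi - N \<omega>) \<in> borel_measurable M" using Dm Nm by measurable
    moreover have "\<And>\<omega>. \<omega> \<in> space M \<Longrightarrow> D \<omega> - bi - N \<omega> = R \<omega>" using Dsplit by simp
    ultimately show ?thesis by (rule measurable_cong[THEN iffD1, rotated]) auto
  qed
  have RL: "(\<integral>\<^sup>+\<omega>. ennreal ((R \<omega>)\<^sup>2) \<partial>M) \<le> ennreal Rb"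
    unfolding R_def Rb_def by (rule R_L2[OF hs H T thc thb L sde Gm K AB supp phi])
  have R2i: "integrable M (\<lambda>\<omega>. (R \<omega>)\<^sup>2)"
  proof (rule integrableI_nonneg)
    show "(\<lambda>\<omega>. (R \<omega>)\<^sup>2) \<in> borel_measurable M" using Rm by measurable
    show "AE \<omega> in M. 0 \<le> (R \<omega>)\<^sup>2" by simp
    show "(\<integral>\<^sup>+\<omega>. ennreal ((R \<omega>)\<^sup>2) \<partial>M) < \<infinity>"
      using le_less_trans[OF RL ennreal_less_top[of Rb]] by (simp add: infinity_ennreal_def)
  qed
  have R2b: "(\<integral>\<omega>. (R \<omega>)\<^sup>2 \<partial>M) \<le> Rb" by (rule integral_real_bounded[OF Rb0 RL])
  have N2i: "integrable M (\<lambda>\<omega>. (N \<omega>)\<^sup>2)" unfolding N_def power_mult_distrib using WI2 by simp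
  have N2b: "(\<integral>\<omega>. (N \<omega>)\<^sup>2 \<partial>M) \<le> (\<epsilon> / \<phi>)\<^sup>2 * Nb"
  proof -
    have "(\<integral>\<omega>. (N \<omega>)\<^sup>2 \<partial>M) = (\<epsilon> / \<phi>)\<^sup>2 * (\<integral>\<omega>. (WI g \<omega>)\<^sup>2 \<partial>M)"
      unfolding N_def power_mult_distrib by simp
    also have "\<dots> \<le> (\<epsilon> / \<phi>)\<^sup>2 * Nb" using nb by (intro mult_left_mono) (auto simp: g_def)
    finally show ?thesis .
  qed
  define F where "F = (\<lambda>\<omega>. 3 * (bi\<^sup>2 + (R \<omega>)\<^sup>2 + (N \<omega>)\<^sup>2))"
  have Fi: "integrable M F" unfolding F_def using R2i N2i by simp
  have DF: "(D \<omega>)\<^sup>2 \<le> F \<omega>" if "\<omega> \<in> space M" for \<omega>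
  proof -
    have sq3: "(a + b + c)\<^sup>2 \<le> 3 * (a\<^sup>2 + b\<^sup>2 + c\<^sup>2)" for a b c :: real
    proof -
      have e: "3 * (a\<^sup>2 + b\<^sup>2 + c\<^sup>2) - (a + b + c)\<^sup>2 = (a - b)\<^sup>2 + (b - c)\<^sup>2 + (a - c)\<^sup>2"
        by (simp add: power2_eq_square algebra_simps)
      have "0 \<le> (a - b)\<^sup>2 + (b - c)\<^sup>2 + (a - c)\<^sup>2" by simp
      then show ?thesis using e by linarith
    qed
    have "(bi + R \<omega> + N \<omega>)\<^sup>2 \<le> 3 * (bi\<^sup>2 + (R \<omega>)\<^sup>2 + (N \<omega>)\<^sup>2)" by (rule sq3)
    then show ?thesis using Dsplit[OF that] by (simp add: F_def)
  qed
  have D2i: "integrable M (\<lambda>\<omega>. (D \<omega>)\<^sup>2)"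
  proof (rule Bochner_Integration.integrable_bound[OF Fi])
    show "(\<lambda>\<omega>. (D \<omega>)\<^sup>2) \<in> borel_measurable M" using Dm by measurable
    show "AE \<omega> in M. norm ((D \<omega>)\<^sup>2) \<le> norm (F \<omega>)"
      using DF by (intro AE_I2) (auto simp: F_def intro: order_trans)
  qed
  have "(\<integral>\<omega>. (D \<omega>)\<^sup>2 \<partial>M) \<le> (\<integral>\<omega>. F \<omega> \<partial>M)"
    using DF by (intro integral_mono_AE D2i Fi AE_I2) auto
  also have "(\<integral>\<omega>. F \<omega> \<partial>M) = 3 * (bi\<^sup>2 + (\<integral>\<omega>. (R \<omega>)\<^sup>2 \<partial>M) + (\<integral>\<omega>. (N \<omega>)\<^sup>2 \<partial>M))"
    unfolding F_def using R2i N2i by (simp add: P.prob_space)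
  also have "\<dots> \<le> 3 * (Bb\<^sup>2 + Rb + (\<epsilon> / \<phi>)\<^sup>2 * Nb)"
  proof -
    have "\<bar>bi\<bar> \<le> Bb" using bias unfolding bi_def x_def .
    then have "\<bar>bi\<bar>\<^sup>2 \<le> Bb\<^sup>2" by (rule power_mono) simp
    then have "bi\<^sup>2 \<le> Bb\<^sup>2" by simp
    then show ?thesis using R2b N2b by simp
  qed
  finally show ?thesis using D2i unfolding D_def Rb_def by simp
qed

lemma exps:
  fixes \<epsilon> H Cb Cn :: real and k :: nat
  assumes e: "\<epsilon> > 0" and H: "H < 1"
  shows "(Cb * (\<epsilon> powr (1 / (real k - H + 2))) ^ Suc k)\<^sup>2 = Cb\<^sup>2 * \<epsilon> powr (2 * (real k + 1) / (real k + 2 - H))"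
    and "(\<epsilon> / \<epsilon> powr (1 / (real k - H + 2)))\<^sup>2 * (Cn * (\<epsilon> powr (1 / (real k - H + 2))) powr (2 * H))
          = Cn * \<epsilon> powr (2 * (real k + 1) / (real k + 2 - H))"
proof -
  define \<rho> where "\<rho> = 1 / (real k - H + 2)"
  define r where "r = 2 * (real k + 1) / (real k + 2 - H)"
  have kH: "real k - H + 2 > 0" using H by simp
  have p: "\<epsilon> powr \<rho> > 0" using e by simp
  have "(\<epsilon> powr \<rho>) ^ Suc k = \<epsilon> powr (\<rho> * real (Suc k))"
    using powr_realpow[OF p, of "Suc k"] by (simp add: powr_powr)
  then have "(Cb * (\<epsilon> powr \<rho>) ^ Suc k)\<^sup>2 = Cb\<^sup>2 * (\<epsilon> powr (\<rho> * real (Suc k)))\<^sup>2"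
    by (simp add: power_mult_distrib)
  also have "(\<epsilon> powr (\<rho> * real (Suc k)))\<^sup>2 = \<epsilon> powr (2 * (\<rho> * real (Suc k)))"
    using e by (simp add: powr_realpow[symmetric] powr_powr mult.commute)
  also have "2 * (\<rho> * real (Suc k)) = r" using kH by (simp add: \<rho>_def r_def field_simps)
  finally show "(Cb * (\<epsilon> powr (1 / (real k - H + 2))) ^ Suc k)\<^sup>2 = Cb\<^sup>2 * \<epsilon> powr (2 * (real k + 1) / (real k + 2 - H))"
    by (simp add: \<rho>_def r_def)
  have "(\<epsilon> / \<epsilon> powr \<rho>)\<^sup>2 * (Cn * (\<epsilon> powr \<rho>) powr (2 * H)) = Cn * (\<epsilon> powr (2 - 2 * \<rho>) * \<epsilon> powr (\<rho> * (2 * H)))"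
  proof -
    have "\<epsilon> / \<epsilon> powr \<rho> = \<epsilon> powr (1 - \<rho>)" using e by (simp add: powr_diff)
    then have "(\<epsilon> / \<epsilon> powr \<rho>)\<^sup>2 = \<epsilon> powr (2 - 2 * \<rho>)"
      using e by (simp add: powr_realpow[symmetric] powr_powr algebra_simps)
    moreover have "(\<epsilon> powr \<rho>) powr (2 * H) = \<epsilon> powr (\<rho> * (2 * H))" by (simp add: powr_powr)
    ultimately show ?thesis by simp
  qed
  also have "\<epsilon> powr (2 - 2 * \<rho>) * \<epsilon> powr (\<rho> * (2 * H)) = \<epsilon> powr (2 - 2 * \<rho> + \<rho> * (2 * H))"
    by (simp add: powr_add)
  also have "2 - 2 * \<rho> + \<rho> * (2 * H) = r"
  proof -
    have \<rho>d: "\<rho> * (real k - H + 2) = 1" using kH by (simp add: \<rho>_def)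
    have e1: "\<rho> * real k - \<rho> * H + 2 * \<rho> = 1" using \<rho>d by (simp add: algebra_simps)
    have "2 - 2 * \<rho> + \<rho> * (2 * H) = 2 * (\<rho> * real k) + 2 * \<rho>" using e1 by linarith
    also have "\<dots> = 2 * (real k + 1) * \<rho>" by (simp add: algebra_simps)
    also have "\<dots> = r" by (simp add: r_def \<rho>_def algebra_simps)
    finally show ?thesis .
  qed
  finally show "(\<epsilon> / \<epsilon> powr (1 / (real k - H + 2)))\<^sup>2 * (Cn * (\<epsilon> powr (1 / (real k - H + 2))) powr (2 * H))
          = Cn * \<epsilon> powr (2 * (real k + 1) / (real k + 2 - H))"
    by (simp add: \<rho>_def r_def)
qed

theorem theorem4p2:
  fixes M :: "'a measure" and Z :: "real \<Rightarrow> 'a \<Rightarrow> real"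
    and WI :: "(real \<Rightarrow> real) \<Rightarrow> 'a \<Rightarrow> real"
    and T x0 L L1 H a b :: real and q k :: nat and G :: "real \<Rightarrow> real"
  assumes "T > 0" and "L > 0" and "L1 > 0" and "q \<ge> 1"
    and "1/2 < H" and "H < 1" and "k \<ge> 1"
    and "hermite_setting M H Z WI"
    and "kernel_ok k G"
    and "0 < a" and "a \<le> b" and "b < T"
  shows "\<exists>C. \<forall>\<^sub>F \<epsilon> in at_right 0.
           \<forall>\<theta>\<in>Theta_class T (k + 1) L L1. \<forall>X. solves_sde M T x0 \<epsilon> \<theta> Z X \<longrightarrow>
             (\<forall>t\<in>{a..b}.
                integrable M (\<lambda>\<omega>. (kernel_est G (\<epsilon> powr (1 / (real k - H + 2))) T \<epsilon> \<theta> X WI t \<omega>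
                                     - \<theta> t * det_sol x0 \<theta> t)\<^sup>2) \<and>
                (\<integral>\<omega>. (kernel_est G (\<epsilon> powr (1 / (real k - H + 2))) T \<epsilon> \<theta> X WI t \<omega>
                        - \<theta> t * det_sol x0 \<theta> t)\<^sup>2 \<partial>M)
                  * \<epsilon> powr (- min 2 (2 * (real k + 1) / (real k + 2 - H))) \<le> C)"
proof -
  note T = assms(1) and L = assms(2) and L1 = assms(3) and H1 = assms(5) and H2 = assms(6)
    and hs = assms(8) and G = assms(9) and a = assms(10) and ab = assms(11) assms(12)
  obtain K A B where Gm: "G \<in> borel_measurable borel" and K: "\<And>u. \<bar>G u\<bar> \<le> K"
    and AB: "A < 0" "0 < B" and supp: "\<And>u. u \<notin> {A..B} \<Longrightarrow> G u = 0"
    and "(LINT u|lborel. G u) = 1" and "\<forall>j\<in>{1..k}. (LINT u|lborel. u ^ j * G u) = 0"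
    using kernel_unfold[OF G] by blast
  have L0: "L \<ge> 0" and L10: "L1 \<ge> 0" using L L1 by auto
  obtain Cb \<phi>0 where \<phi>0: "\<phi>0 > 0" and bias: "\<forall>\<theta>\<in>Theta_class T (Suc k) L L1. \<forall>\<phi>. 0 < \<phi> \<longrightarrow> \<phi> < \<phi>0 \<longrightarrow>
     (\<forall>t\<in>{a..b}. \<bar>(1 / \<phi>) * integral {0..T} (\<lambda>\<tau>. G ((\<tau> - t) / \<phi>) * \<theta> \<tau> * det_sol x0 \<theta> \<tau>)
                    - \<theta> t * det_sol x0 \<theta> t\<bar> \<le> Cb * \<phi> ^ Suc k)"
    using bias_bound[OF T L0 L10 G a ab, of x0] by blast
  obtain Cn where noise: "\<forall>\<phi> t. \<phi> > 0 \<longrightarrow>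
     wiener_admissible H (\<lambda>\<tau>. G ((\<tau> - t) / \<phi>) * indicator {0..T} \<tau>) \<and>
     (\<integral>\<omega>. (WI (\<lambda>\<tau>. G ((\<tau> - t) / \<phi>) * indicator {0..T} \<tau>) \<omega>)\<^sup>2 \<partial>M) \<le> Cn * \<phi> powr (2 * H)"
    using noise_bound[OF H1 H2 hs G, of T] by blast
  have H0: "H > 0" using H1 by simp
  define \<rho> where "\<rho> = 1 / (real k - H + 2)"
  have \<rho>: "\<rho> > 0" using H2 by (simp add: \<rho>_def)
  define r where "r = 2 * (real k + 1) / (real k + 2 - H)"
  have r2: "r \<le> 2" and r0: "r \<ge> 0" using H2 by (auto simp: r_def field_simps)
  have minr: "min 2 r = r" using r2 by simp
  define CR where "CR = (K * L)\<^sup>2 * ((B - A) * (1 + exp (2 * L * T) * L * T))\<^sup>2 * T powr (2 * H)"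
  have CR0: "CR \<ge> 0" by (simp add: CR_def)
  define C where "C = 3 * (Cb\<^sup>2 + CR + Cn)"
  have key: "\<forall>\<theta>\<in>Theta_class T (k + 1) L L1. \<forall>X. solves_sde M T x0 \<epsilon> \<theta> Z X \<longrightarrow>
             (\<forall>t\<in>{a..b}.
                integrable M (\<lambda>\<omega>. (kernel_est G (\<epsilon> powr (1 / (real k - H + 2))) T \<epsilon> \<theta> X WI t \<omega>
                                     - \<theta> t * det_sol x0 \<theta> t)\<^sup>2) \<and>
                (\<integral>\<omega>. (kernel_est G (\<epsilon> powr (1 / (real k - H + 2))) T \<epsilon> \<theta> X WI t \<omega>
                        - \<theta> t * det_sol x0 \<theta> t)\<^sup>2 \<partial>M)
                  * \<epsilon> powr (- min 2 (2 * (real k + 1) / (real k + 2 - H))) \<le> C)"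
    if e0: "0 < \<epsilon>" and e1: "\<epsilon> < 1" and ephi: "\<epsilon> powr \<rho> < \<phi>0" for \<epsilon>
  proof (intro ballI allI impI)
    fix \<theta> X t assume th: "\<theta> \<in> Theta_class T (k + 1) L L1" and sde: "solves_sde M T x0 \<epsilon> \<theta> Z X"
      and t: "t \<in> {a..b}"
    define \<phi> where "\<phi> = \<epsilon> powr \<rho>"
    have phi: "\<phi> > 0" using e0 by (simp add: \<phi>_def)
    have th': "\<theta> \<in> Theta_class T (Suc k) L L1" using th by simp
    obtain D where "\<forall>t\<in>{0..T}. D 0 t = \<theta> t" and thb: "\<forall>t\<in>{0..T}. \<bar>\<theta> t\<bar> \<le> L"
      and "\<forall>j<Suc k. \<forall>t\<in>{0..T}. (D j has_real_derivative D (Suc j) t) (at t within {0..T})"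
      and "\<forall>x\<in>{0..T}. \<forall>y\<in>{0..T}. \<bar>D (Suc k) x - D (Suc k) y\<bar> \<le> L1 * \<bar>x - y\<bar>"
      and thc: "continuous_on {0..T} \<theta>"
      using theta_unfold[OF th'] by auto
    have bb: "\<bar>(1 / \<phi>) * integral {0..T} (\<lambda>\<tau>. G ((\<tau> - t) / \<phi>) * \<theta> \<tau> * det_sol x0 \<theta> \<tau>)
                    - \<theta> t * det_sol x0 \<theta> t\<bar> \<le> Cb * \<phi> ^ Suc k"
      using bias th' phi ephi t by (auto simp: \<phi>_def)
    have nn: "wiener_admissible H (\<lambda>\<tau>. G ((\<tau> - t) / \<phi>) * indicator {0..T} \<tau>)"
      "(\<integral>\<omega>. (WI (\<lambda>\<tau>. G ((\<tau> - t) / \<phi>) * indicator {0..T} \<tau>) \<omega>)\<^sup>2 \<partial>M) \<le> Cn * \<phi> powr (2 * H)"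
      using noise phi by auto
    note c = core[OF hs H0 T thc thb L0 sde Gm K AB supp phi bb nn]
    have E: "(\<integral>\<omega>. (kernel_est G \<phi> T \<epsilon> \<theta> X WI t \<omega> - \<theta> t * det_sol x0 \<theta> t)\<^sup>2 \<partial>M) \<le> C * \<epsilon> powr r"
    proof -
      have "(\<integral>\<omega>. (kernel_est G \<phi> T \<epsilon> \<theta> X WI t \<omega> - \<theta> t * det_sol x0 \<theta> t)\<^sup>2 \<partial>M)
          \<le> 3 * ((Cb * \<phi> ^ Suc k)\<^sup>2 + (K * L * \<epsilon>)\<^sup>2 * ((B - A) * (1 + exp (2 * L * T) * L * T))\<^sup>2 * T powr (2 * H)
                  + (\<epsilon> / \<phi>)\<^sup>2 * (Cn * \<phi> powr (2 * H)))" using c by blast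
      also have "(Cb * \<phi> ^ Suc k)\<^sup>2 = Cb\<^sup>2 * \<epsilon> powr r"
        unfolding \<phi>_def \<rho>_def r_def by (rule exps(1)[OF e0 H2])
      also have "(\<epsilon> / \<phi>)\<^sup>2 * (Cn * \<phi> powr (2 * H)) = Cn * \<epsilon> powr r"
        unfolding \<phi>_def \<rho>_def r_def by (rule exps(2)[OF e0 H2])
      also have "(K * L * \<epsilon>)\<^sup>2 * ((B - A) * (1 + exp (2 * L * T) * L * T))\<^sup>2 * T powr (2 * H) = CR * \<epsilon>\<^sup>2"
        by (simp add: CR_def power_mult_distrib mult_ac)
      also have "CR * \<epsilon>\<^sup>2 \<le> CR * \<epsilon> powr r"
      proof (rule mult_left_mono[OF _ CR0])
        have "\<epsilon> powr 2 \<le> \<epsilon> powr r" by (rule powr_mono') (use r2 e0 e1 in auto)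
        moreover have "\<epsilon> powr 2 = \<epsilon>\<^sup>2" using e0 by simp
        ultimately show "\<epsilon>\<^sup>2 \<le> \<epsilon> powr r" by simp
      qed
      finally show ?thesis by (simp add: C_def algebra_simps)
    qed
    have "(\<integral>\<omega>. (kernel_est G \<phi> T \<epsilon> \<theta> X WI t \<omega> - \<theta> t * det_sol x0 \<theta> t)\<^sup>2 \<partial>M) * \<epsilon> powr (- r)
        \<le> C * \<epsilon> powr r * \<epsilon> powr (- r)"
      using E by (rule mult_right_mono) simp
    also have "\<dots> = C" using e0 by (simp add: mult.assoc powr_add[symmetric])
    finally have F: "(\<integral>\<omega>. (kernel_est G \<phi> T \<epsilon> \<theta> X WI t \<omega> - \<theta> t * det_sol x0 \<theta> t)\<^sup>2 \<partial>M) * \<epsilon> powr (- r) \<le> C" .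
    show "integrable M (\<lambda>\<omega>. (kernel_est G (\<epsilon> powr (1 / (real k - H + 2))) T \<epsilon> \<theta> X WI t \<omega>
                                     - \<theta> t * det_sol x0 \<theta> t)\<^sup>2) \<and>
                (\<integral>\<omega>. (kernel_est G (\<epsilon> powr (1 / (real k - H + 2))) T \<epsilon> \<theta> X WI t \<omega>
                        - \<theta> t * det_sol x0 \<theta> t)\<^sup>2 \<partial>M)
                  * \<epsilon> powr (- min 2 (2 * (real k + 1) / (real k + 2 - H))) \<le> C"
      using c F minr unfolding \<phi>_def \<rho>_def r_def by simp
  qed
  have ev: "\<forall>\<^sub>F \<epsilon> in at_right 0. 0 < \<epsilon> \<and> \<epsilon> < 1 \<and> \<epsilon> powr \<rho> < \<phi>0"
  proof -
    define b0 where "b0 = min 1 (\<phi>0 powr (1 / \<rho>))"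
    have b0: "b0 > 0" using \<phi>0 by (simp add: b0_def)
    have "\<forall>y>0. y < b0 \<longrightarrow> 0 < y \<and> y < 1 \<and> y powr \<rho> < \<phi>0"
    proof (intro allI impI conjI)
      fix y :: real assume y: "0 < y" "y < b0"
      show "0 < y" by (rule y(1))
      show "y < 1" using y by (simp add: b0_def)
      have "y < \<phi>0 powr (1 / \<rho>)" using y by (simp add: b0_def)
      then have "y powr \<rho> < (\<phi>0 powr (1 / \<rho>)) powr \<rho>"
        using y \<rho> by (intro powr_less_mono2) auto
      also have "\<dots> = \<phi>0" using \<rho> \<phi>0 by (simp add: powr_powr)
      finally show "y powr \<rho> < \<phi>0" .
    qed
    then show ?thesis unfolding eventually_at_right_field using b0 by blast
  qed
  show ?thesis
    by (rule exI[of _ C], rule eventually_mono[OF ev]) (use key in blast)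
qed

end
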